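(* Let $\mu\in\mathcal C$ and let $\nu\mapsto S_\nu$ be a smooth map $\mathcal C\to\mathfrak u(\mathfrak g,J)$. Suppose $\nu_t$ solves the gauged bracket flow $\dot\nu_t=-\pi(P_{\nu_t}-S_{\nu_t})\nu_t$, $\nu_0=\mu$. Then there exists a smooth family $k_t\in\mathrm U(\mathfrak g,J)$ such that $\nu_t=k_t\cdot\mu_t$, where $\mu_t$ solves the bracket flow $\dot\mu_t=-\pi(P_{\mu_t})\mu_t$, $\mu_0=\mu$.
   Context: $\mathfrak g$ is a real vector space of dimension $2n$ with complex structure $J$ and inner product $\langle\cdot,\cdot\rangle$ for which $J$ is orthogonal; $e_1,\dots,e_{2n}$ an orthonormal basis. Brackets are skew-symmetric bilinear maps $\mathfrak g\times\mathfrak g\to\mathfrak g$; $\mathcal C$ is the set of brackets satisfying the Jacobi identity and $\nu(J\cdot,\cdot)=J\nu(\cdot,\cdot)$. $\mathrm{GL}(\mathfrak g,J)$ (invertible endomorphisms commuting with $J$) acts on brackets by $h\cdot\nu=h\nu(h^{-1}\cdot,h^{-1}\cdot)$, and $\pi(A)\nu=A\nu(\cdot,\cdot)-\nu(A\cdot,\cdot)-\nu(\cdot,A\cdot)$ is the derivative of this action. $\mathrm U(\mathfrak g,J)$ is the subgroup preserving $\langle\cdot,\cdot\rangle$, with Lie algebra $\mathfrak u(\mathfrak g,J)$ of $J$-commuting skew-adjoint endomorphisms. $P_\nu:=\nu\nu^*$, i.e. $P_\nu v=\sum_{i<j}\langle v,\nu(e_i,e_j)\rangle\nu(e_i,e_j)$;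 it satisfies $P_{k\cdot\nu}=kP_\nu k^*$ for $k\in\mathrm U(\mathfrak g,J)$. *)

theory Defs
  imports "HOL-Analysis.Analysis"
begin

text \<open>The Lie algebra g is modelled as real^'n with the standard inner product
  (orthonormal basis e_i = axis i 1). A bracket nu is encoded by its values on
  basis pairs: nu $ i $ j = nu(e_i, e_j).\<close>

type_synonym 'n brkt = "real^'n^'n^'n"
type_synonym 'n endo = "real^'n^'n"

definition br :: "'n::finite brkt \<Rightarrow> real^'n \<Rightarrow> real^'n \<Rightarrow> real^'n" where
  "br \<nu> x y = (\<Sum>i\<in>UNIV. \<Sum>j\<in>UNIV. (x $ i * y $ j) *\<^sub>R (\<nu> $ i $ j))"

definition mkbr :: "(real^'n \<Rightarrow> real^'n \<Rightarrow> real^'n) \<Rightarrow> 'n::finite brkt" where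
  "mkbr f = (\<chi> i j. f (axis i 1) (axis j 1))"

text \<open>Skew-symmetry (bilinearity is built into the encoding).\<close>
definition is_bracket :: "'n::finite brkt \<Rightarrow> bool" where
  "is_bracket \<nu> \<longleftrightarrow> (\<forall>x y. br \<nu> x y = - br \<nu> y x)"

definition Cset :: "'n::finite endo \<Rightarrow> 'n brkt set" where
  "Cset J = {\<nu>. is_bracket \<nu> \<and>
      (\<forall>x y z. br \<nu> x (br \<nu> y z) + br \<nu> y (br \<nu> z x) + br \<nu> z (br \<nu> x y) = 0) \<and>
      (\<forall>x y. br \<nu> (J *v x) y = J *v br \<nu> x y)}"

text \<open>Action h . nu = h nu(h^-1 ., h^-1 .) and its derivative pi.\<close>
definition act :: "'n::finite endo \<Rightarrow> 'n brkt \<Rightarrow> 'n brkt" where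
  "act h \<nu> = mkbr (\<lambda>x y. h *v br \<nu> (matrix_inv h *v x) (matrix_inv h *v y))"

definition piop :: "'n::finite endo \<Rightarrow> 'n brkt \<Rightarrow> 'n brkt" where
  "piop A \<nu> = mkbr (\<lambda>x y. A *v br \<nu> x y - br \<nu> (A *v x) y - br \<nu> x (A *v y))"

definition Pop :: "'n::{finite,linorder} brkt \<Rightarrow> 'n endo" where
  "Pop \<nu> = matrix (\<lambda>v. \<Sum>(i,j)\<in>{(i,j). i < j}.
      (v \<bullet> br \<nu> (axis i 1) (axis j 1)) *\<^sub>R br \<nu> (axis i 1) (axis j 1))"

definition Ugrp :: "'n::finite endo \<Rightarrow> 'n endo set" where
  "Ugrp J = {k. invertible k \<and> k ** J = J ** k \<and> transpose k ** k = mat 1}"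

definition ualg :: "'n::finite endo \<Rightarrow> 'n endo set" where
  "ualg J = {A. A ** J = J ** A \<and> transpose A = - A}"

text \<open>C-infinity on an open set: all iterated directional derivatives exist and
  are continuous. D (v # vs) is the derivative of D vs in direction v.\<close>
definition smooth_on :: "'a::real_normed_vector set \<Rightarrow> ('a \<Rightarrow> 'b::real_normed_vector) \<Rightarrow> bool" where
  "smooth_on U f \<longleftrightarrow> open U \<and> (\<exists>D :: 'a list \<Rightarrow> 'a \<Rightarrow> 'b. D [] = f \<and>
     (\<forall>vs. continuous_on U (D vs)) \<and>
     (\<forall>vs v. \<forall>x\<in>U. ((\<lambda>t. D vs (x + t *\<^sub>R v)) has_vector_derivative D (v # vs) x) (at 0)))"

text \<open>Smooth curve on a time interval I (one-sided derivatives at endpoints).\<close>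
definition smooth_curve :: "real set \<Rightarrow> (real \<Rightarrow> 'b::real_normed_vector) \<Rightarrow> bool" where
  "smooth_curve I c \<longleftrightarrow> (\<exists>D :: nat \<Rightarrow> real \<Rightarrow> 'b. D 0 = c \<and>
     (\<forall>m. \<forall>t\<in>I. (D m has_vector_derivative D (Suc m) t) (at t within I)))"

end

theory Submission
  imports Defs
begin


lemma gronwall_half_fwd:
  fixes z :: "real \<Rightarrow> 'a::real_inner"
  assumes "t0 \<le> t" and sub: "{t0..t} \<subseteq> I" and z0: "z t0 = 0"
    and der: "\<forall>s\<in>I. (z has_vector_derivative z' s) (at s within I)"
    and bnd: "\<forall>s\<in>I. norm (z' s) \<le> L * norm (z s)"
  shows "z t = 0"
proof -
  define g where "g s = exp (-2*L*(s - t0)) * (z s \<bullet> z s)" for s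
  define g' where "g' s = exp (-2*L*(s - t0)) * (2 * (z s \<bullet> z' s)) + (-2*L) * exp (-2*L*(s - t0)) * (z s \<bullet> z s)" for s
  have d: "(g has_derivative (\<lambda>h. g' s * h)) (at s within {t0..t})" if "s \<in> {t0..t}" for s
  proof -
    have zd: "(z has_vector_derivative z' s) (at s within {t0..t})"
      using der sub that has_vector_derivative_within_subset by blast
    have "((\<lambda>s. z s \<bullet> z s) has_vector_derivative (z s \<bullet> z' s + z' s \<bullet> z s)) (at s within {t0..t})"
      using bounded_bilinear.has_vector_derivative[OF bounded_bilinear_inner zd zd] .
    then have i: "((\<lambda>s. z s \<bullet> z s) has_real_derivative 2 * (z s \<bullet> z' s)) (at s within {t0..t})"
      by (simp add: has_real_derivative_iff_has_vector_derivative inner_commute)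
    have e: "((\<lambda>s. exp (-2*L*(s - t0))) has_real_derivative (-2*L) * exp (-2*L*(s - t0))) (at s within {t0..t})"
      by (auto intro!: derivative_eq_intros)
    have "(g has_real_derivative g' s) (at s within {t0..t})"
      unfolding g_def g'_def using DERIV_mult[OF e i] by (simp add: algebra_simps)
    then show ?thesis by (simp add: has_field_derivative_def)
  qed
  obtain x where x: "x \<in> {t0..t}" "g t - g t0 = g' x * (t - t0)"
    using mvt_very_simple[OF assms(1), of g "\<lambda>s h. g' s * h"] d by auto
  have "z x \<bullet> z' x \<le> L * (z x \<bullet> z x)"
  proof -
    have "z x \<bullet> z' x \<le> norm (z x) * norm (z' x)" by (rule norm_cauchy_schwarz)
    also have "\<dots> \<le> norm (z x) * (L * norm (z x))"
      using bnd sub x(1) by (intro mult_left_mono) auto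
    finally show ?thesis by (simp add: power2_norm_eq_inner[symmetric] power2_eq_square algebra_simps)
  qed
  moreover have "g' x = (2 * exp (-2*L*(x - t0))) * (z x \<bullet> z' x - L * (z x \<bullet> z x))"
    by (simp add: g'_def algebra_simps)
  ultimately have "g' x \<le> 0" by (simp add: mult_nonneg_nonpos)
  moreover have "g t = g' x * (t - t0)" using x z0 by (simp add: g_def)
  ultimately have "g t \<le> 0" using assms(1) by (simp add: mult_nonpos_nonneg)
  then have "z t \<bullet> z t \<le> 0" unfolding g_def by (simp add: mult_le_0_iff)
  then show ?thesis by (metis inner_ge_zero inner_eq_zero_iff order_antisym)
qed

lemma gronwall_half_bwd:
  fixes z :: "real \<Rightarrow> 'a::real_inner"
  assumes "t \<le> t0" and sub: "{t..t0} \<subseteq> I" and z0: "z t0 = 0"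
    and der: "\<forall>s\<in>I. (z has_vector_derivative z' s) (at s within I)"
    and bnd: "\<forall>s\<in>I. norm (z' s) \<le> L * norm (z s)"
  shows "z t = 0"
proof -
  define g where "g s = exp (2*L*(s - t0)) * (z s \<bullet> z s)" for s
  define g' where "g' s = exp (2*L*(s - t0)) * (2 * (z s \<bullet> z' s)) + (2*L) * exp (2*L*(s - t0)) * (z s \<bullet> z s)" for s
  have d: "(g has_derivative (\<lambda>h. g' s * h)) (at s within {t..t0})" if "s \<in> {t..t0}" for s
  proof -
    have zd: "(z has_vector_derivative z' s) (at s within {t..t0})"
      using der sub that has_vector_derivative_within_subset by blast
    have "((\<lambda>s. z s \<bullet> z s) has_vector_derivative (z s \<bullet> z' s + z' s \<bullet> z s)) (at s within {t..t0})"
      using bounded_bilinear.has_vector_derivative[OF bounded_bilinear_inner zd zd] .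
    then have i: "((\<lambda>s. z s \<bullet> z s) has_real_derivative 2 * (z s \<bullet> z' s)) (at s within {t..t0})"
      by (simp add: has_real_derivative_iff_has_vector_derivative inner_commute)
    have e: "((\<lambda>s. exp (2*L*(s - t0))) has_real_derivative (2*L) * exp (2*L*(s - t0))) (at s within {t..t0})"
      by (auto intro!: derivative_eq_intros)
    have "(g has_real_derivative g' s) (at s within {t..t0})"
      unfolding g_def g'_def using DERIV_mult[OF e i] by (simp add: algebra_simps)
    then show ?thesis by (simp add: has_field_derivative_def)
  qed
  obtain x where x: "x \<in> {t..t0}" "g t0 - g t = g' x * (t0 - t)"
    using mvt_very_simple[OF assms(1), of g "\<lambda>s h. g' s * h"] d by auto
  have "- (z x \<bullet> z' x) \<le> L * (z x \<bullet> z x)"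
  proof -
    have "- (z x \<bullet> z' x) \<le> norm (z x) * norm (z' x)"
      using norm_cauchy_schwarz[of "z x" "- z' x"] by simp
    also have "\<dots> \<le> norm (z x) * (L * norm (z x))"
      using bnd sub x(1) by (intro mult_left_mono) auto
    finally show ?thesis by (simp add: power2_norm_eq_inner[symmetric] power2_eq_square algebra_simps)
  qed
  moreover have "g' x = (2 * exp (2*L*(x - t0))) * (z x \<bullet> z' x + L * (z x \<bullet> z x))"
    by (simp add: g'_def algebra_simps)
  ultimately have "g' x \<ge> 0" by simp
  moreover have "g t = - (g' x * (t0 - t))" using x z0 by (simp add: g_def)
  ultimately have "g t \<le> 0" using assms(1) by simp
  then have "z t \<bullet> z t \<le> 0" unfolding g_def by (simp add: mult_le_0_iff)
  then show ?thesis by (metis inner_ge_zero inner_eq_zero_iff order_antisym)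
qed

lemma interval_between:
  fixes I :: "real set"
  assumes "is_interval I" "a \<in> I" "b \<in> I"
  shows "{a..b} \<subseteq> I" "{b..a} \<subseteq> I"
  using assms unfolding is_interval_1 by (meson atLeastAtMost_iff subsetI)+

lemma gronwall_zero:
  fixes z :: "real \<Rightarrow> 'a::real_inner"
  assumes I: "is_interval I" and t0: "t0 \<in> I" and z0: "z t0 = 0"
    and der: "\<forall>s\<in>I. (z has_vector_derivative z' s) (at s within I)"
    and bnd: "\<forall>t\<in>I. \<exists>\<delta>>0. \<exists>L. \<forall>s\<in>I. dist s t < \<delta> \<longrightarrow> norm (z' s) \<le> L * norm (z s)"
  shows "\<forall>t\<in>I. z t = 0"
proof -
  define Z where "Z = {t\<in>I. z t = 0}"
  have cont: "continuous_on I z"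
    unfolding continuous_on_eq_continuous_within using der has_vector_derivative_continuous by blast
  have cl: "closedin (top_of_set I) Z"
    unfolding Z_def by (rule continuous_closedin_preimage_constant[OF cont])
  have op: "openin (top_of_set I) Z"
    unfolding openin_euclidean_subtopology_iff
  proof (intro conjI ballI)
    show "Z \<subseteq> I" by (auto simp: Z_def)
    fix t assume tZ: "t \<in> Z"
    then have tI: "t \<in> I" and zt: "z t = 0" by (auto simp: Z_def)
    obtain \<delta> L where d: "\<delta> > 0" and L: "\<forall>s\<in>I. dist s t < \<delta> \<longrightarrow> norm (z' s) \<le> L * norm (z s)"
      using bnd tI by blast
    define J where "J = {r\<in>I. dist r t < \<delta>}"
    have JI: "J \<subseteq> I" unfolding J_def by auto
    have derJ: "\<forall>s\<in>J. (z has_vector_derivative z' s) (at s within J)"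
    proof
      fix s assume "s \<in> J"
      then have "s \<in> I" using JI by auto
      then show "(z has_vector_derivative z' s) (at s within J)"
        using has_vector_derivative_within_subset[OF der[rule_format] JI] by blast
    qed
    have bJ: "\<forall>s\<in>J. norm (z' s) \<le> L * norm (z s)" using L unfolding J_def by simp
    show "\<exists>e>0. \<forall>x'\<in>I. dist x' t < e \<longrightarrow> x' \<in> Z"
    proof (intro exI[of _ \<delta>] conjI d ballI impI)
      fix s assume sI: "s \<in> I" and ds: "dist s t < \<delta>"
      have "z s = 0"
      proof (cases "t \<le> s")
        case True
        have "{t..s} \<subseteq> J" using interval_between[OF I tI sI] ds
          by (auto simp: J_def dist_real_def)
        then show ?thesis using gronwall_half_fwd[OF True _ zt derJ bJ] by blast
      next
        case False
        have "{s..t} \<subseteq> J" using interval_between[OF I tI sI] ds False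
          by (auto simp: J_def dist_real_def)
        then show ?thesis using gronwall_half_bwd[of s t, OF _ _ zt derJ bJ] False by auto
      qed
      then show "s \<in> Z" using sI by (auto simp: Z_def)
    qed
  qed
  have "connected I" using is_interval_connected[OF I] .
  then have "Z = {} \<or> Z = I" using cl op unfolding connected_clopen by blast
  moreover have "t0 \<in> Z" using t0 z0 by (auto simp: Z_def)
  ultimately show ?thesis by (auto simp: Z_def)
qed



lemma exp_integral_fwd:
  fixes K c :: real
  assumes "t0 \<le> \<tau>" "K > 0"
  shows "integral {t0..\<tau>} (\<lambda>s. K * c * exp (2*K*(s - t0))) = c/2 * (exp (2*K*(\<tau> - t0)) - 1)"
proof -
  have "((\<lambda>s. K * c * exp (2*K*(s - t0))) has_integral
        (c/2 * exp (2*K*(\<tau> - t0)) - c/2 * exp (2*K*(t0 - t0)))) {t0..\<tau>}"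
  proof (rule fundamental_theorem_of_calculus[OF assms(1)])
    fix s assume "s \<in> {t0..\<tau>}"
    have "((\<lambda>s. c/2 * exp (2*K*(s - t0))) has_real_derivative (c/2 * (exp (2*K*(s - t0)) * (2*K)))) (at s within {t0..\<tau>})"
      by (auto intro!: derivative_eq_intros)
    then show "((\<lambda>s. c/2 * exp (2*K*(s - t0))) has_vector_derivative K * c * exp (2*K*(s - t0))) (at s within {t0..\<tau>})"
      by (simp add: has_real_derivative_iff_has_vector_derivative algebra_simps)
  qed
  then have "integral {t0..\<tau>} (\<lambda>s. K * c * exp (2*K*(s - t0))) = c/2 * exp (2*K*(\<tau> - t0)) - c/2 * exp (2*K*(t0 - t0))" by (rule integral_unique)
  then show ?thesis by (simp add: algebra_simps)
qed

lemma exp_integral_bwd: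
  fixes K c :: real
  assumes "\<tau> \<le> t0" "K > 0"
  shows "integral {\<tau>..t0} (\<lambda>s. K * c * exp (2*K*(t0 - s))) = c/2 * (exp (2*K*(t0 - \<tau>)) - 1)"
proof -
  have "((\<lambda>s. K * c * exp (2*K*(t0 - s))) has_integral
        (- c/2 * exp (2*K*(t0 - t0)) - (- c/2 * exp (2*K*(t0 - \<tau>))))) {\<tau>..t0}"
  proof (rule fundamental_theorem_of_calculus[OF assms(1)])
    fix s assume "s \<in> {\<tau>..t0}"
    have "((\<lambda>s. - c/2 * exp (2*K*(t0 - s))) has_real_derivative (- c/2 * (exp (2*K*(t0 - s)) * (- (2*K))))) (at s within {\<tau>..t0})"
      by (auto intro!: derivative_eq_intros)
    then show "((\<lambda>s. - c/2 * exp (2*K*(t0 - s))) has_vector_derivative K * c * exp (2*K*(t0 - s))) (at s within {\<tau>..t0})"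
      by (simp add: has_real_derivative_iff_has_vector_derivative algebra_simps)
  qed
  then have "integral {\<tau>..t0} (\<lambda>s. K * c * exp (2*K*(t0 - s))) = - c/2 * exp (2*K*(t0 - t0)) - (- c/2 * exp (2*K*(t0 - \<tau>)))" by (rule integral_unique)
  then show ?thesis by (simp add: algebra_simps)
qed

lemma pint_bound:
  fixes g :: "real \<Rightarrow> 'a::banach"
  assumes ab: "t0 \<in> {a..b}" "\<tau> \<in> {a..b}" and K: "K > 0"
    and g: "continuous_on {a..b} g"
    and gb: "\<And>s. s \<in> {a..b} \<Longrightarrow> norm (g s) \<le> K * d * exp (2*K*\<bar>s - t0\<bar>)"
  shows "norm (integral {a..\<tau>} g - integral {a..t0} g) \<le> d/2 * (exp (2*K*\<bar>\<tau> - t0\<bar>) - 1)"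
proof (cases "t0 \<le> \<tau>")
  case True
  have gi: "g integrable_on {a..\<tau>}"
    using g ab by (intro integrable_continuous_real) (auto intro: continuous_on_subset)
  have "integral {a..t0} g + integral {t0..\<tau>} g = integral {a..\<tau>} g"
    using True ab gi by (intro Henstock_Kurzweil_Integration.integral_combine) auto
  then have "integral {a..\<tau>} g - integral {a..t0} g = integral {t0..\<tau>} g" by (simp add: algebra_simps)
  also have "norm \<dots> \<le> integral {t0..\<tau>} (\<lambda>s. K * d * exp (2*K*(s - t0)))"
  proof (rule integral_norm_bound_integral)
    show "g integrable_on {t0..\<tau>}"
      using g ab by (intro integrable_continuous_real) (auto intro: continuous_on_subset)
    show "(\<lambda>s. K * d * exp (2*K*(s - t0))) integrable_on {t0..\<tau>}"
      by (intro integrable_continuous_real continuous_intros)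
    fix s assume "s \<in> {t0..\<tau>}"
    then show "norm (g s) \<le> K * d * exp (2*K*(s - t0))" using gb[of s] ab by auto
  qed
  also have "\<dots> = d/2 * (exp (2*K*\<bar>\<tau> - t0\<bar>) - 1)" using exp_integral_fwd[OF True K] True by simp
  finally show ?thesis .
next
  case False
  have gi: "g integrable_on {a..t0}"
    using g ab by (intro integrable_continuous_real) (auto intro: continuous_on_subset)
  have "integral {a..\<tau>} g + integral {\<tau>..t0} g = integral {a..t0} g"
    using False ab gi by (intro Henstock_Kurzweil_Integration.integral_combine) auto
  then have "integral {a..\<tau>} g - integral {a..t0} g = - integral {\<tau>..t0} g" by (simp add: algebra_simps)
  then have "norm (integral {a..\<tau>} g - integral {a..t0} g) = norm (integral {\<tau>..t0} g)" by simp
  also have "\<dots> \<le> integral {\<tau>..t0} (\<lambda>s. K * d * exp (2*K*(t0 - s)))"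
  proof (rule integral_norm_bound_integral)
    show "g integrable_on {\<tau>..t0}"
      using g ab by (intro integrable_continuous_real) (auto intro: continuous_on_subset)
    show "(\<lambda>s. K * d * exp (2*K*(t0 - s))) integrable_on {\<tau>..t0}"
      by (intro integrable_continuous_real continuous_intros)
    fix s assume "s \<in> {\<tau>..t0}"
    then show "norm (g s) \<le> K * d * exp (2*K*(t0 - s))" using gb[of s] ab by auto
  qed
  also have "\<dots> = d/2 * (exp (2*K*\<bar>\<tau> - t0\<bar>) - 1)" using exp_integral_bwd[of \<tau> t0 K d] False K by simp
  finally show ?thesis .
qed



lemma picard_compact:
  fixes F :: "real \<Rightarrow> 'a::euclidean_space \<Rightarrow> 'a"
  assumes ab: "t0 \<in> {a..b}"
    and cont: "\<And>y. continuous_on {a..b} y \<Longrightarrow> continuous_on {a..b} (\<lambda>s. F s (y s))"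
    and lip: "\<And>s x y. s \<in> {a..b} \<Longrightarrow> norm (F s x - F s y) \<le> L * norm (x - y)"
  shows "\<exists>x. x t0 = x0 \<and> (\<forall>t\<in>{a..b}. (x has_vector_derivative F t (x t)) (at t within {a..b}))"
proof -
  define K where "K = max L 0 + 1"
  have K: "K > 0" unfolding K_def by auto
  have lipK: "norm (F s x - F s y) \<le> K * norm (x - y)" if "s \<in> {a..b}" for s x y
  proof -
    have "norm (F s x - F s y) \<le> L * norm (x - y)" using lip[OF that] .
    also have "\<dots> \<le> K * norm (x - y)" unfolding K_def by (intro mult_right_mono) auto
    finally show ?thesis .
  qed
  define w where "w s = exp (- (2*K*\<bar>s - t0\<bar>))" for s
  define wi where "wi s = exp (2*K*\<bar>s - t0\<bar>)" for s
  have wwi: "w s * wi s = 1" for s unfolding w_def wi_def by (simp add: exp_minus field_simps)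
  define cl where "cl t = max a (min b t)" for t
  have cl: "cl t \<in> {a..b}" for t using ab unfolding cl_def by auto
  have cl_id: "t \<in> {a..b} \<Longrightarrow> cl t = t" for t unfolding cl_def by auto
  have clc: "continuous_on UNIV cl" unfolding cl_def by (intro continuous_intros)
  define h where "h u s = F s (wi s *\<^sub>R apply_bcontfun u s)" for u :: "real \<Rightarrow>\<^sub>C 'a" and s
  have hc: "continuous_on {a..b} (h u)" for u
    unfolding h_def wi_def by (intro cont continuous_intros continuous_on_subset[OF continuous_on_apply_bcontfun]) auto
  define P where "P g t = integral {a..t} g - integral {a..t0} g" for g :: "real \<Rightarrow> 'a" and t
  define f where "f u t = w t *\<^sub>R (x0 + P (h u) t)" for u t
  have Pd: "((\<lambda>t. x0 + P g t) has_vector_derivative g t) (at t within {a..b})"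
    if "continuous_on {a..b} g" "t \<in> {a..b}" for g t
    unfolding P_def using integral_has_vector_derivative[OF that]
    by (auto intro!: derivative_eq_intros)
  have fc: "continuous_on {a..b} (f u)" for u
  proof -
    have "continuous_on {a..b} (\<lambda>t. x0 + P (h u) t)"
      unfolding continuous_on_eq_continuous_within
      using Pd[OF hc] has_vector_derivative_continuous by blast
    moreover have "continuous_on {a..b} w" unfolding w_def by (intro continuous_intros)
    ultimately show ?thesis unfolding f_def by (intro continuous_on_scaleR)
  qed
  have memb: "(\<lambda>t. f u (cl t)) \<in> bcontfun" for u
  proof -
    have c1: "continuous_on UNIV (\<lambda>t. f u (cl t))"
      using continuous_on_compose2[OF fc clc] cl by blast
    have "range (\<lambda>t. f u (cl t)) \<subseteq> f u ` {a..b}" using cl by auto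
    moreover have "compact (f u ` {a..b})" by (intro compact_continuous_image fc compact_Icc)
    ultimately have "bounded (range (\<lambda>t. f u (cl t)))"
      using bounded_subset compact_imp_bounded by blast
    then show ?thesis using c1 unfolding bcontfun_def by auto
  qed
  define T where "T u = Bcontfun (\<lambda>t. f u (cl t))" for u
  have Tapp: "apply_bcontfun (T u) t = f u (cl t)" for u t
    unfolding T_def using memb Bcontfun_inverse by metis
  have contr: "dist (T u) (T v) \<le> 1/2 * dist u v" for u v
  proof (rule dist_bound)
    fix t
    define \<tau> where "\<tau> = cl t"
    have \<tau>: "\<tau> \<in> {a..b}" unfolding \<tau>_def using cl .
    define d where "d = dist u v"
    have hb: "norm (h u s - h v s) \<le> K * d * exp (2*K*\<bar>s - t0\<bar>)" if "s \<in> {a..b}" for s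
    proof -
      have "norm (h u s - h v s) \<le> K * norm (wi s *\<^sub>R apply_bcontfun u s - wi s *\<^sub>R apply_bcontfun v s)"
        unfolding h_def using lipK[OF that] .
      also have "\<dots> = K * (wi s * dist (apply_bcontfun u s) (apply_bcontfun v s))"
        by (simp add: dist_norm wi_def scaleR_diff_right[symmetric])
      also have "\<dots> \<le> K * (wi s * d)"
        unfolding d_def using K by (intro mult_left_mono dist_bounded) (auto simp: wi_def)
      finally show ?thesis by (simp add: wi_def mult_ac)
    qed
    have hdc: "continuous_on {a..b} (\<lambda>s. h u s - h v s)" using hc by (intro continuous_intros)
    have Pdiff: "P (h u) \<tau> - P (h v) \<tau> = integral {a..\<tau>} (\<lambda>s. h u s - h v s) - integral {a..t0} (\<lambda>s. h u s - h v s)"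
    proof -
      have i1: "h u integrable_on {a..x}" "h v integrable_on {a..x}" if "x \<in> {a..b}" for x
        using that by (auto intro!: integrable_continuous_real continuous_on_subset[OF hc])
      show ?thesis unfolding P_def using i1[OF \<tau>] i1[OF ab] by (simp add: integral_diff)
    qed
    have "norm (P (h u) \<tau> - P (h v) \<tau>) \<le> d/2 * (exp (2*K*\<bar>\<tau> - t0\<bar>) - 1)"
      unfolding Pdiff by (rule pint_bound[OF ab \<tau> K hdc hb])
    then have "w \<tau> * norm (P (h u) \<tau> - P (h v) \<tau>) \<le> w \<tau> * (d/2 * (exp (2*K*\<bar>\<tau> - t0\<bar>) - 1))"
      by (intro mult_left_mono) (auto simp: w_def)
    also have "\<dots> = d/2 * (1 - w \<tau>)" using wwi[of \<tau>] by (simp add: wi_def algebra_simps)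
    also have "\<dots> \<le> d/2" using zero_le_dist[of u v] unfolding d_def
      by (intro mult_left_le) (auto simp: w_def)
    finally have "w \<tau> * norm (P (h u) \<tau> - P (h v) \<tau>) \<le> d/2" .
    moreover have "dist (apply_bcontfun (T u) t) (apply_bcontfun (T v) t) = w \<tau> * norm (P (h u) \<tau> - P (h v) \<tau>)"
      unfolding Tapp \<tau>_def[symmetric] f_def dist_norm
      by (simp add: scaleR_diff_right[symmetric] w_def)
    ultimately show "dist (apply_bcontfun (T u) t) (apply_bcontfun (T v) t) \<le> 1/2 * dist u v"
      by (simp add: d_def)
  qed
  obtain u where u: "T u = u"
    using banach_fix_type[of "1/2" T] contr by auto
  define x where "x t = wi t *\<^sub>R apply_bcontfun u t" for t
  have hx: "h u s = F s (x s)" for s unfolding h_def x_def by simp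
  have xeq: "x t = x0 + P (\<lambda>s. F s (x s)) t" if "t \<in> {a..b}" for t
  proof -
    have "apply_bcontfun u t = f u t" using Tapp[of u t] u cl_id[OF that] by simp
    then have "x t = wi t *\<^sub>R f u t" unfolding x_def by simp
    also have "\<dots> = x0 + P (h u) t" unfolding f_def using wwi[of t] by (simp add: mult.commute)
    finally show ?thesis unfolding hx[abs_def] .
  qed
  have xc: "continuous_on {a..b} (\<lambda>s. F s (x s))"
    unfolding hx[symmetric] using hc .
  show ?thesis
  proof (intro exI conjI ballI)
    show "x t0 = x0" using xeq[OF ab] by (simp add: P_def)
    fix t assume t: "t \<in> {a..b}"
    show "(x has_vector_derivative F t (x t)) (at t within {a..b})"
      using has_vector_derivative_weaken[OF Pd[OF xc t] t order_refl] xeq by auto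
  qed
qed



lemma interval_lower_nbhd:
  fixes I :: "real set"
  assumes I: "is_interval I" and t: "t \<in> I" and t0: "t0 \<in> I"
  shows "\<exists>a\<in>I. a \<le> t0 \<and> a \<le> t \<and> (\<exists>\<delta>>0. \<forall>s\<in>I. dist s t < \<delta> \<longrightarrow> a \<le> s)"
proof (cases "\<exists>s\<in>I. s < t")
  case True
  then obtain s1 where s1: "s1 \<in> I" "s1 < t" by auto
  define a where "a = min s1 t0"
  have aI: "a \<in> I" using s1 t0 by (simp add: a_def min_def)
  show ?thesis
  proof (intro bexI[OF _ aI] conjI exI[of _ "t - a"] ballI impI)
    show "a \<le> t0" "a \<le> t" "0 < t - a" using s1 by (auto simp: a_def)
    fix s assume "s \<in> I" "dist s t < t - a"
    then show "a \<le> s" by (auto simp: dist_real_def)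
  qed
next
  case False
  then have "t \<le> t0" using t0 by force
  show ?thesis
  proof (intro bexI[OF _ t] conjI exI[of _ 1] ballI impI)
    show "t \<le> t0" by fact
    fix s assume "s \<in> I" then show "t \<le> s" using False by force
  qed auto
qed

lemma interval_upper_nbhd:
  fixes I :: "real set"
  assumes I: "is_interval I" and t: "t \<in> I" and t0: "t0 \<in> I"
  shows "\<exists>b\<in>I. t0 \<le> b \<and> t \<le> b \<and> (\<exists>\<delta>>0. \<forall>s\<in>I. dist s t < \<delta> \<longrightarrow> s \<le> b)"
proof (cases "\<exists>s\<in>I. t < s")
  case True
  then obtain s1 where s1: "s1 \<in> I" "t < s1" by auto
  define b where "b = max s1 t0"
  have bI: "b \<in> I" using s1 t0 by (simp add: b_def max_def)
  show ?thesis
  proof (intro bexI[OF _ bI] conjI exI[of _ "b - t"] ballI impI)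
    show "t0 \<le> b" "t \<le> b" "0 < b - t" using s1 by (auto simp: b_def)
    fix s assume "s \<in> I" "dist s t < b - t"
    then show "s \<le> b" by (auto simp: dist_real_def)
  qed
next
  case False
  then have "t0 \<le> t" using t0 by force
  show ?thesis
  proof (intro bexI[OF _ t] conjI exI[of _ 1] ballI impI)
    show "t0 \<le> t" by fact
    fix s assume "s \<in> I" then show "s \<le> t" using False by force
  qed auto
qed

lemma interval_nbhd:
  fixes I :: "real set"
  assumes I: "is_interval I" and t: "t \<in> I" and t0: "t0 \<in> I"
  shows "\<exists>a b \<delta>. a \<in> I \<and> b \<in> I \<and> a \<le> t0 \<and> t0 \<le> b \<and> t \<in> {a..b} \<and> \<delta> > 0 \<and>
            (\<forall>s\<in>I. dist s t < \<delta> \<longrightarrow> s \<in> {a..b})"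
proof -
  obtain a d1 where a: "a \<in> I" "a \<le> t0" "a \<le> t" "d1 > 0" "\<forall>s\<in>I. dist s t < d1 \<longrightarrow> a \<le> s"
    using interval_lower_nbhd[OF assms] by blast
  obtain b d2 where b: "b \<in> I" "t0 \<le> b" "t \<le> b" "d2 > 0" "\<forall>s\<in>I. dist s t < d2 \<longrightarrow> s \<le> b"
    using interval_upper_nbhd[OF assms] by blast
  show ?thesis
    by (rule exI[of _ a], rule exI[of _ b], rule exI[of _ "min d1 d2"]) (use a b in auto)
qed

lemma ode_exists_interval:
  fixes F :: "real \<Rightarrow> 'a::euclidean_space \<Rightarrow> 'a"
  assumes I: "is_interval I" and t0: "t0 \<in> I"
    and cont: "\<And>a b y. {a..b} \<subseteq> I \<Longrightarrow> continuous_on {a..b} y \<Longrightarrow> continuous_on {a..b} (\<lambda>s. F s (y s))"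
    and lip: "\<And>a b. {a..b} \<subseteq> I \<Longrightarrow> \<exists>L. \<forall>s\<in>{a..b}. \<forall>x y. norm (F s x - F s y) \<le> L * norm (x - y)"
  shows "\<exists>x. x t0 = x0 \<and> (\<forall>t\<in>I. (x has_vector_derivative F t (x t)) (at t within I))"
proof -
  define G where "G a b \<longleftrightarrow> a \<in> I \<and> b \<in> I \<and> a \<le> t0 \<and> t0 \<le> b" for a b
  define sol where "sol a b = (SOME x. x t0 = x0 \<and> (\<forall>t\<in>{a..b}. (x has_vector_derivative F t (x t)) (at t within {a..b})))" for a b
  have sub: "G a b \<Longrightarrow> {a..b} \<subseteq> I" for a b
    unfolding G_def using I by (meson interval_between)
  have solP: "sol a b t0 = x0 \<and> (\<forall>t\<in>{a..b}. (sol a b has_vector_derivative F t (sol a b t)) (at t within {a..b}))"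
    if gab: "G a b" for a b
  proof -
    obtain L where L: "\<forall>s\<in>{a..b}. \<forall>x y. norm (F s x - F s y) \<le> L * norm (x - y)"
      using lip[OF sub[OF gab]] by blast
    have "\<exists>x. x t0 = x0 \<and> (\<forall>t\<in>{a..b}. (x has_vector_derivative F t (x t)) (at t within {a..b}))"
      by (rule picard_compact[where L=L]) (use gab L cont[OF sub[OF gab]] in \<open>auto simp: G_def\<close>)
    then show ?thesis unfolding sol_def by (rule someI_ex)
  qed
  have agree: "sol a b t = sol a' b' t"
    if g1: "G a b" and g2: "G a' b'" and t: "t \<in> {a..b}" "t \<in> {a'..b'}" for a b a' b' t
  proof -
    define J where "J = {max a a'..min b b'}"
    have JI: "J \<subseteq> {a..b}" "J \<subseteq> {a'..b'}" unfolding J_def by auto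
    obtain L where L: "\<forall>s\<in>{a..b}. \<forall>x y. norm (F s x - F s y) \<le> L * norm (x - y)"
      using lip[OF sub[OF g1]] by blast
    have "\<forall>t\<in>J. (\<lambda>s. sol a b s - sol a' b' s) t = 0"
    proof (rule gronwall_zero[where z'="\<lambda>s. F s (sol a b s) - F s (sol a' b' s)"])
      show "is_interval J" unfolding J_def by (rule is_interval_cc)
      show "t0 \<in> J" using g1 g2 unfolding J_def G_def by auto
      show "sol a b t0 - sol a' b' t0 = 0" using solP[OF g1] solP[OF g2] by simp
      show "\<forall>s\<in>J. ((\<lambda>s. sol a b s - sol a' b' s) has_vector_derivative F s (sol a b s) - F s (sol a' b' s)) (at s within J)"
      proof
        fix s assume s: "s \<in> J"
        show "((\<lambda>s. sol a b s - sol a' b' s) has_vector_derivative F s (sol a b s) - F s (sol a' b' s)) (at s within J)"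
          using has_vector_derivative_within_subset[OF solP[OF g1, THEN conjunct2, rule_format] JI(1)]
                has_vector_derivative_within_subset[OF solP[OF g2, THEN conjunct2, rule_format] JI(2)] s JI
          by (intro has_vector_derivative_diff) auto
      qed
      show "\<forall>t\<in>J. \<exists>\<delta>>0. \<exists>L. \<forall>s\<in>J. dist s t < \<delta> \<longrightarrow> norm (F s (sol a b s) - F s (sol a' b' s)) \<le> L * norm (sol a b s - sol a' b' s)"
        using L JI by (intro ballI exI[of _ 1] exI[of _ L]) auto
    qed
    moreover have "t \<in> J" using t unfolding J_def by auto
    ultimately show ?thesis by simp
  qed
  have "\<forall>t\<in>I. \<exists>p. G (fst p) (fst (snd p)) \<and> t \<in> {fst p..fst (snd p)} \<and> snd (snd p) > 0 \<and>
            (\<forall>s\<in>I. dist s t < snd (snd p) \<longrightarrow> s \<in> {fst p..fst (snd p)})"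
  proof
    fix t assume "t \<in> I"
    then obtain a b \<delta> where "a \<in> I \<and> b \<in> I \<and> a \<le> t0 \<and> t0 \<le> b \<and> t \<in> {a..b} \<and> \<delta> > 0 \<and>
            (\<forall>s\<in>I. dist s t < \<delta> \<longrightarrow> s \<in> {a..b})"
      using interval_nbhd[OF I _ t0] by blast
    then show "\<exists>p. G (fst p) (fst (snd p)) \<and> t \<in> {fst p..fst (snd p)} \<and> snd (snd p) > 0 \<and>
            (\<forall>s\<in>I. dist s t < snd (snd p) \<longrightarrow> s \<in> {fst p..fst (snd p)})"
      by (intro exI[of _ "(a,b,\<delta>)"]) (auto simp: G_def)
  qed
  then obtain p where p: "\<forall>t\<in>I. G (fst (p t)) (fst (snd (p t))) \<and> t \<in> {fst (p t)..fst (snd (p t))} \<and> snd (snd (p t)) > 0 \<and>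
            (\<forall>s\<in>I. dist s t < snd (snd (p t)) \<longrightarrow> s \<in> {fst (p t)..fst (snd (p t))})"
    by metis
  define A where "A t = fst (p t)" for t
  define B where "B t = fst (snd (p t))" for t
  define D where "D t = snd (snd (p t))" for t
  have p': "G (A t) (B t)" "t \<in> {A t..B t}" "D t > 0" "\<forall>s\<in>I. dist s t < D t \<longrightarrow> s \<in> {A t..B t}"
    if "t \<in> I" for t using p that unfolding A_def B_def D_def by blast+
  define x where "x t = sol (A t) (B t) t" for t
  show ?thesis
  proof (intro exI[of _ x] conjI ballI)
    show "x t0 = x0" unfolding x_def using solP[OF p'(1)[OF t0]] by simp
    fix t assume t: "t \<in> I"
    define S where "S = I \<inter> ball t (D t)"
    have SS: "S \<subseteq> {A t..B t}" using p'(4)[OF t] unfolding S_def by (auto simp: dist_commute)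
    have eq: "sol (A t) (B t) s = x s" if "s \<in> S" for s
    proof -
      have "s \<in> I" "s \<in> {A t..B t}" using that SS unfolding S_def by auto
      then show ?thesis unfolding x_def using agree[OF p'(1)[OF t] p'(1)[OF \<open>s \<in> I\<close>] _ p'(2)] by auto
    qed
    have tS: "t \<in> S" using t p'(3)[OF t] unfolding S_def by auto
    have "(x has_vector_derivative F t (sol (A t) (B t) t)) (at t within S)"
      by (rule has_vector_derivative_weaken[OF solP[OF p'(1)[OF t], THEN conjunct2, rule_format, OF p'(2)[OF t]] tS SS eq])
    moreover have "sol (A t) (B t) t = x t" using eq tS by blast
    moreover have "at t within S = at t within I"
      unfolding S_def by (rule at_within_nhd[where S="ball t (D t)"]) (use p'(3)[OF t] in auto)
    ultimately show "(x has_vector_derivative F t (x t)) (at t within I)" by simp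
  qed
qed



lemma seg_bound:
  fixes g :: "real \<Rightarrow> 'b::real_normed_vector"
  assumes d: "\<And>s. s \<in> closed_segment 0 c \<Longrightarrow> (g has_vector_derivative g' s) (at s)"
    and B: "\<And>s. s \<in> closed_segment 0 c \<Longrightarrow> norm (g' s) \<le> B"
  shows "norm (g c - g 0) \<le> B * \<bar>c\<bar>"
proof -
  have "norm (g c - g 0) \<le> B * norm (c - 0)"
  proof (rule differentiable_bound[of "closed_segment 0 c" g "\<lambda>s h. h *\<^sub>R g' s"])
    show "convex (closed_segment 0 c)" by simp
    fix s assume s: "s \<in> closed_segment 0 c"
    show "(g has_derivative (\<lambda>h. h *\<^sub>R g' s)) (at s within closed_segment 0 c)"
      using d[OF s] unfolding has_vector_derivative_def by (rule has_derivative_at_withinI)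
    show "onorm (\<lambda>h. h *\<^sub>R g' s) \<le> B"
    proof (rule onorm_le)
      fix h :: real
      show "norm (h *\<^sub>R g' s) \<le> B * norm h"
        using B[OF s] by (simp add: mult.commute[of B]) (metis abs_ge_zero mult_left_mono)
    qed
  qed auto
  then show ?thesis by simp
qed

lemma partials_frechet:
  fixes f :: "'a::euclidean_space \<Rightarrow> 'b::real_normed_vector"
  assumes U: "open U" "x \<in> U"
    and dc: "\<And>b. b \<in> Basis \<Longrightarrow> continuous_on U (Df b)"
    and dd: "\<And>b y. b \<in> Basis \<Longrightarrow> y \<in> U \<Longrightarrow> ((\<lambda>t. f (y + t *\<^sub>R b)) has_vector_derivative Df b y) (at 0)"
  shows "(f has_derivative (\<lambda>v. \<Sum>b\<in>Basis. (v \<bullet> b) *\<^sub>R Df b x)) (at x)"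
  unfolding has_derivative_at_alt
proof (intro conjI allI impI)
  show "bounded_linear (\<lambda>v. \<Sum>b\<in>Basis. (v \<bullet> b) *\<^sub>R Df b x)"
    by (intro bounded_linear_intros)
  fix e :: real assume e: "e > 0"
  define n where "n = real DIM('a)"
  have n: "n > 0" unfolding n_def by simp
  define e' where "e' = e / n"
  have e': "e' > 0" unfolding e'_def using e n by simp
  have ev: "\<forall>\<^sub>F y in at x. y \<in> U \<and> (\<forall>b\<in>Basis. dist (Df b y) (Df b x) < e')"
  proof (intro eventually_conj eventually_ball_finite ballI)
    show "\<forall>\<^sub>F y in at x. y \<in> U" using U by (rule eventually_at_in_open')
    show "finite (Basis::'a set)" by simp
    fix b :: 'a assume b: "b \<in> Basis"
    have "isCont (Df b) x" using dc[OF b] U continuous_on_eq_continuous_at by blast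
    then have "(Df b \<longlongrightarrow> Df b x) (at x)" by (simp add: isCont_def)
    then show "\<forall>\<^sub>F y in at x. dist (Df b y) (Df b x) < e'" using e' by (rule tendstoD)
  qed
  then obtain d where d: "d > 0" and dP: "\<And>y. y \<noteq> x \<Longrightarrow> dist y x < d \<Longrightarrow> y \<in> U \<and> (\<forall>b\<in>Basis. dist (Df b y) (Df b x) < e')"
    unfolding eventually_at by auto
  have dP': "y \<in> U \<and> (\<forall>b\<in>Basis. dist (Df b y) (Df b x) < e')" if "dist y x < d" for y
    using dP[OF _ that] U e' by (cases "y = x") auto
  show "\<exists>d>0. \<forall>y. norm (y - x) < d \<longrightarrow> norm (f y - f x - (\<Sum>b\<in>Basis. ((y - x) \<bullet> b) *\<^sub>R Df b x)) \<le> e * norm (y - x)"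
  proof (intro exI[of _ "d / n"] conjI allI impI)
    show "d / n > 0" using d n by simp
    fix y assume y: "norm (y - x) < d / n"
    define v where "v = y - x"
    have l1: "(\<Sum>b\<in>Basis. \<bar>v \<bullet> b\<bar>) \<le> n * norm v"
    proof -
      have "(\<Sum>b\<in>Basis. \<bar>v \<bullet> b\<bar>) \<le> (\<Sum>b\<in>(Basis::'a set). norm v)"
        by (intro sum_mono Basis_le_norm)
      then show ?thesis by (simp add: n_def)
    qed
    have l1d: "(\<Sum>b\<in>Basis. \<bar>v \<bullet> b\<bar>) < d"
      using l1 y n unfolding v_def by (simp add: pos_less_divide_eq mult.commute order_le_less_trans)
    have claim: "norm (f (x + (\<Sum>b\<in>B. (v \<bullet> b) *\<^sub>R b)) - f x - (\<Sum>b\<in>B. (v \<bullet> b) *\<^sub>R Df b x))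
                   \<le> e' * (\<Sum>b\<in>B. \<bar>v \<bullet> b\<bar>)" if "B \<subseteq> Basis" for B
      using finite_subset[OF that finite_Basis] that
    proof (induction B rule: finite_induct)
      case empty
      then show ?case by simp
    next
      case (insert b B)
      have bB: "b \<in> Basis" "B \<subseteq> Basis" using insert by auto
      define p where "p = x + (\<Sum>b\<in>B. (v \<bullet> b) *\<^sub>R b)"
      define c where "c = v \<bullet> b"
      have pn: "norm (p - x) \<le> (\<Sum>b\<in>B. \<bar>v \<bullet> b\<bar>)"
      proof -
        have "norm (p - x) = norm (\<Sum>b\<in>B. (v \<bullet> b) *\<^sub>R b)" by (simp add: p_def)
        also have "\<dots> \<le> (\<Sum>b\<in>B. norm ((v \<bullet> b) *\<^sub>R b))" by (rule norm_sum)
        also have "\<dots> = (\<Sum>b\<in>B. \<bar>v \<bullet> b\<bar>)" using bB by (intro sum.cong) auto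
        finally show ?thesis .
      qed
      have Bsub: "(\<Sum>b\<in>B. \<bar>v \<bullet> b\<bar>) + \<bar>c\<bar> \<le> (\<Sum>b\<in>Basis. \<bar>v \<bullet> b\<bar>)"
      proof -
        have "(\<Sum>b\<in>B. \<bar>v \<bullet> b\<bar>) + \<bar>c\<bar> = (\<Sum>b\<in>insert b B. \<bar>v \<bullet> b\<bar>)"
          using insert by (simp add: c_def)
        also have "\<dots> \<le> (\<Sum>b\<in>Basis. \<bar>v \<bullet> b\<bar>)"
          using insert by (intro sum_mono2) auto
        finally show ?thesis .
      qed
      have segin: "dist (p + s *\<^sub>R b) x < d" if "s \<in> closed_segment 0 c" for s
      proof -
        have "\<bar>s\<bar> \<le> \<bar>c\<bar>" using that by (auto simp: closed_segment_eq_real_ivl split: if_splits)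
        have "dist (p + s *\<^sub>R b) x = norm ((p - x) + s *\<^sub>R b)" by (simp add: dist_norm algebra_simps)
        also have "\<dots> \<le> norm (p - x) + \<bar>s\<bar>" using bB by (intro order_trans[OF norm_triangle_ineq]) simp
        also have "\<dots> \<le> (\<Sum>b\<in>B. \<bar>v \<bullet> b\<bar>) + \<bar>c\<bar>" using pn \<open>\<bar>s\<bar> \<le> \<bar>c\<bar>\<close> by simp
        also have "\<dots> < d" using Bsub l1d by simp
        finally show ?thesis .
      qed
      define g where "g s = f (p + s *\<^sub>R b) - s *\<^sub>R Df b x" for s
      have gd: "(g has_vector_derivative (Df b (p + s *\<^sub>R b) - Df b x)) (at s)"
        if "s \<in> closed_segment 0 c" for s
      proof -
        have yU: "p + s *\<^sub>R b \<in> U" using dP'[OF segin[OF that]] by simp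
        have "((\<lambda>t. f ((p + s *\<^sub>R b) + t *\<^sub>R b)) has_vector_derivative Df b (p + s *\<^sub>R b)) (at (s - s))"
          using dd[OF bB(1) yU] by simp
        then have "(((\<lambda>t. f ((p + s *\<^sub>R b) + t *\<^sub>R b)) \<circ> (\<lambda>r. r - s)) has_vector_derivative 1 *\<^sub>R Df b (p + s *\<^sub>R b)) (at s)"
          by (intro vector_diff_chain_at) (auto intro!: derivative_eq_intros)
        moreover have "((\<lambda>t. f ((p + s *\<^sub>R b) + t *\<^sub>R b)) \<circ> (\<lambda>r. r - s)) = (\<lambda>r. f (p + r *\<^sub>R b))"
          by (auto simp: fun_eq_iff algebra_simps)
        ultimately have "((\<lambda>r. f (p + r *\<^sub>R b)) has_vector_derivative Df b (p + s *\<^sub>R b)) (at s)" by simp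
        then show ?thesis unfolding g_def
          by (intro derivative_eq_intros) auto
      qed
      have gb: "norm (g c - g 0) \<le> e' * \<bar>c\<bar>"
      proof (rule seg_bound[OF gd])
        fix s assume "s \<in> closed_segment 0 c"
        then have "dist (Df b (p + s *\<^sub>R b)) (Df b x) < e'" using dP'[OF segin] bB by blast
        then show "norm (Df b (p + s *\<^sub>R b) - Df b x) \<le> e'" by (simp add: dist_norm)
      qed auto
      have "x + (\<Sum>b\<in>insert b B. (v \<bullet> b) *\<^sub>R b) = p + c *\<^sub>R b"
        using insert by (simp add: p_def c_def algebra_simps)
      moreover have "(\<Sum>b\<in>insert b B. (v \<bullet> b) *\<^sub>R Df b x) = c *\<^sub>R Df b x + (\<Sum>b\<in>B. (v \<bullet> b) *\<^sub>R Df b x)"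
        using insert by (simp add: c_def)
      ultimately have "norm (f (x + (\<Sum>b\<in>insert b B. (v \<bullet> b) *\<^sub>R b)) - f x - (\<Sum>b\<in>insert b B. (v \<bullet> b) *\<^sub>R Df b x))
          = norm ((g c - g 0) + (f p - f x - (\<Sum>b\<in>B. (v \<bullet> b) *\<^sub>R Df b x)))"
        by (simp add: g_def algebra_simps)
      also have "\<dots> \<le> norm (g c - g 0) + norm (f p - f x - (\<Sum>b\<in>B. (v \<bullet> b) *\<^sub>R Df b x))"
        by (rule norm_triangle_ineq)
      also have "\<dots> \<le> e' * \<bar>c\<bar> + e' * (\<Sum>b\<in>B. \<bar>v \<bullet> b\<bar>)"
        using gb insert(3)[OF bB(2)] unfolding p_def by simp
      also have "\<dots> = e' * (\<Sum>b\<in>insert b B. \<bar>v \<bullet> b\<bar>)"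
        using insert by (simp add: c_def algebra_simps)
      finally show ?case .
    qed
    have "norm (f y - f x - (\<Sum>b\<in>Basis. ((y - x) \<bullet> b) *\<^sub>R Df b x)) \<le> e' * (\<Sum>b\<in>Basis. \<bar>v \<bullet> b\<bar>)"
      using claim[OF order_refl] unfolding v_def by (simp add: euclidean_representation)
    also have "\<dots> \<le> e' * (n * norm v)" using l1 e' by (intro mult_left_mono) auto
    also have "\<dots> = e * norm (y - x)" unfolding e'_def v_def using n by simp
    finally show "norm (f y - f x - (\<Sum>b\<in>Basis. ((y - x) \<bullet> b) *\<^sub>R Df b x)) \<le> e * norm (y - x)" .
  qed
qed



definition Cm :: "nat \<Rightarrow> real set \<Rightarrow> (real \<Rightarrow> 'b::real_normed_vector) \<Rightarrow> bool" where
  "Cm m I c \<longleftrightarrow> (\<exists>D. D 0 = c \<and> (\<forall>j<m. \<forall>t\<in>I. (D j has_vector_derivative D (Suc j) t) (at t within I)))"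

lemma Cm_0: "Cm 0 I c"
  unfolding Cm_def by auto

lemma Cm_Suc: "Cm (Suc m) I c \<longleftrightarrow> (\<exists>c'. (\<forall>t\<in>I. (c has_vector_derivative c' t) (at t within I)) \<and> Cm m I c')"
proof
  assume "Cm (Suc m) I c"
  then obtain D where D: "D 0 = c" "\<forall>j<Suc m. \<forall>t\<in>I. (D j has_vector_derivative D (Suc j) t) (at t within I)"
    unfolding Cm_def by blast
  show "\<exists>c'. (\<forall>t\<in>I. (c has_vector_derivative c' t) (at t within I)) \<and> Cm m I c'"
    by (rule exI[of _ "D 1"]) (use D in \<open>auto simp: Cm_def intro!: exI[of _ "\<lambda>j. D (Suc j)"]\<close>)
next
  assume "\<exists>c'. (\<forall>t\<in>I. (c has_vector_derivative c' t) (at t within I)) \<and> Cm m I c'"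
  then obtain c' D where c': "\<forall>t\<in>I. (c has_vector_derivative c' t) (at t within I)"
    and D: "D 0 = c'" "\<forall>j<m. \<forall>t\<in>I. (D j has_vector_derivative D (Suc j) t) (at t within I)"
    unfolding Cm_def by blast
  define E where "E j = (case j of 0 \<Rightarrow> c | Suc i \<Rightarrow> D i)" for j
  have "\<forall>j<Suc m. \<forall>t\<in>I. (E j has_vector_derivative E (Suc j) t) (at t within I)"
  proof (intro allI impI ballI)
    fix j t assume "j < Suc m" "t \<in> I"
    then show "(E j has_vector_derivative E (Suc j) t) (at t within I)"
      using c' D by (cases j) (auto simp: E_def)
  qed
  then show "Cm (Suc m) I c" unfolding Cm_def by (intro exI[of _ E]) (auto simp: E_def)
qed

lemma Cm_SucD: "Cm (Suc m) I c \<Longrightarrow> Cm m I c"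
  unfolding Cm_def by auto

lemma Cm_const: "Cm m I (\<lambda>t. k)"
proof (induction m)
  case 0 show ?case by (rule Cm_0)
next
  case (Suc m)
  have "Cm m I (\<lambda>t. 0::'a)"
    unfolding Cm_def by (intro exI[of _ "\<lambda>j t. 0"]) auto
  then show ?case unfolding Cm_Suc by (intro exI[of _ "\<lambda>t. 0"]) auto
qed

lemma Cm_add: "Cm m I x \<Longrightarrow> Cm m I y \<Longrightarrow> Cm m I (\<lambda>t. x t + y t)"
  unfolding Cm_def
proof (elim exE conjE)
  fix Dx Dy assume x: "Dx 0 = x" "\<forall>j<m. \<forall>t\<in>I. (Dx j has_vector_derivative Dx (Suc j) t) (at t within I)"
    and y: "Dy 0 = y" "\<forall>j<m. \<forall>t\<in>I. (Dy j has_vector_derivative Dy (Suc j) t) (at t within I)"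
  show "\<exists>D. D 0 = (\<lambda>t. x t + y t) \<and> (\<forall>j<m. \<forall>t\<in>I. (D j has_vector_derivative D (Suc j) t) (at t within I))"
    by (rule exI[of _ "\<lambda>j t. Dx j t + Dy j t"]) (use x y in \<open>auto intro!: has_vector_derivative_add\<close>)
qed

lemma Cm_linear:
  assumes f: "bounded_linear f" shows "Cm m I x \<Longrightarrow> Cm m I (\<lambda>t. f (x t))"
  unfolding Cm_def
proof (elim exE conjE)
  fix Dx assume x: "Dx 0 = x" "\<forall>j<m. \<forall>t\<in>I. (Dx j has_vector_derivative Dx (Suc j) t) (at t within I)"
  show "\<exists>D. D 0 = (\<lambda>t. f (x t)) \<and> (\<forall>j<m. \<forall>t\<in>I. (D j has_vector_derivative D (Suc j) t) (at t within I))"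
    by (rule exI[of _ "\<lambda>j t. f (Dx j t)"]) (use x in \<open>auto intro!: bounded_linear.has_vector_derivative[OF f]\<close>)
qed

lemma Cm_bilinear:
  assumes pr: "bounded_bilinear pr"
  shows "Cm m I x \<Longrightarrow> Cm m I y \<Longrightarrow> Cm m I (\<lambda>t. pr (x t) (y t))"
proof (induction m arbitrary: x y)
  case 0 show ?case by (rule Cm_0)
next
  case (Suc m)
  obtain x' where x': "\<forall>t\<in>I. (x has_vector_derivative x' t) (at t within I)" "Cm m I x'"
    using Suc.prems(1) unfolding Cm_Suc by blast
  obtain y' where y': "\<forall>t\<in>I. (y has_vector_derivative y' t) (at t within I)" "Cm m I y'"
    using Suc.prems(2) unfolding Cm_Suc by blast
  have "Cm m I (\<lambda>t. pr (x t) (y' t) + pr (x' t) (y t))"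
    using Suc.IH[OF Cm_SucD[OF Suc.prems(1)] y'(2)] Suc.IH[OF x'(2) Cm_SucD[OF Suc.prems(2)]]
    by (rule Cm_add)
  moreover have "\<forall>t\<in>I. ((\<lambda>t. pr (x t) (y t)) has_vector_derivative pr (x t) (y' t) + pr (x' t) (y t)) (at t within I)"
    using x'(1) y'(1) bounded_bilinear.has_vector_derivative[OF pr] by blast
  ultimately show ?case unfolding Cm_Suc
    by (intro exI[of _ "\<lambda>t. pr (x t) (y' t) + pr (x' t) (y t)"]) simp
qed

lemma Cm_sum:
  assumes "finite A" shows "(\<And>i. i \<in> A \<Longrightarrow> Cm m I (f i)) \<Longrightarrow> Cm m I (\<lambda>t. \<Sum>i\<in>A. f i t)"
  using assms
proof (induction A rule: finite_induct)
  case empty then show ?case by (simp add: Cm_const)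
next
  case (insert a A)
  then show ?case by (simp add: Cm_add)
qed

definition smooth_fam :: "'a::real_normed_vector set \<Rightarrow> ('a list \<Rightarrow> 'a \<Rightarrow> 'b::real_normed_vector) \<Rightarrow> bool" where
  "smooth_fam U D \<longleftrightarrow> (\<forall>vs. continuous_on U (D vs)) \<and>
     (\<forall>vs v. \<forall>x\<in>U. ((\<lambda>t. D vs (x + t *\<^sub>R v)) has_vector_derivative D (v # vs) x) (at 0))"

lemma smooth_fam_shift: "smooth_fam U D \<Longrightarrow> smooth_fam U (\<lambda>vs. D (vs @ [b]))"
  unfolding smooth_fam_def by auto

lemma smooth_fam_deriv:
  fixes D :: "'a::euclidean_space list \<Rightarrow> 'a \<Rightarrow> 'b::real_normed_vector"
  assumes U: "open U" and sf: "smooth_fam U D"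
    and xd: "(x has_vector_derivative x') (at t within I)" and xt: "x t \<in> U"
  shows "((\<lambda>t. D [] (x t)) has_vector_derivative (\<Sum>b\<in>Basis. (x' \<bullet> b) *\<^sub>R D [b] (x t))) (at t within I)"
proof -
  have fr: "(D [] has_derivative (\<lambda>v. \<Sum>b\<in>Basis. (v \<bullet> b) *\<^sub>R D [b] (x t))) (at (x t))"
    by (rule partials_frechet[OF U xt]) (use sf in \<open>auto simp: smooth_fam_def\<close>)
  have "((\<lambda>t. D [] (x t)) has_derivative (\<lambda>h. \<Sum>b\<in>Basis. ((h *\<^sub>R x') \<bullet> b) *\<^sub>R D [b] (x t))) (at t within I)"
    using has_derivative_compose[OF xd[unfolded has_vector_derivative_def] fr] .
  then show ?thesis unfolding has_vector_derivative_def
    by (simp add: scaleR_sum_right)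
qed

lemma Cm_chain:
  fixes x :: "real \<Rightarrow> 'a::euclidean_space" and D :: "'a list \<Rightarrow> 'a \<Rightarrow> 'b::real_normed_vector"
  assumes U: "open U" and xU: "\<forall>t\<in>I. x t \<in> U"
  shows "Cm m I x \<Longrightarrow> smooth_fam U D \<Longrightarrow> Cm m I (\<lambda>t. D [] (x t))"
proof (induction m arbitrary: D)
  case 0 show ?case by (rule Cm_0)
next
  case (Suc m)
  obtain x' where x': "\<forall>t\<in>I. (x has_vector_derivative x' t) (at t within I)" "Cm m I x'"
    using Suc.prems(1) unfolding Cm_Suc by blast
  have "Cm m I (\<lambda>t. \<Sum>b\<in>Basis. (x' t \<bullet> b) *\<^sub>R D [b] (x t))"
  proof (rule Cm_sum[OF finite_Basis])
    fix b :: 'a assume b: "b \<in> Basis"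
    have c1: "Cm m I (\<lambda>t. x' t \<bullet> b)"
      using Cm_linear[OF bounded_linear_inner_left x'(2)] .
    have c2: "Cm m I (\<lambda>t. D ([] @ [b]) (x t))"
      using Suc.IH[OF Cm_SucD[OF Suc.prems(1)] smooth_fam_shift[OF Suc.prems(2)]] .
    show "Cm m I (\<lambda>t. (x' t \<bullet> b) *\<^sub>R D [b] (x t))"
      using Cm_bilinear[OF bounded_bilinear_scaleR c1 c2] by simp
  qed
  moreover have "\<forall>t\<in>I. ((\<lambda>t. D [] (x t)) has_vector_derivative (\<Sum>b\<in>Basis. (x' t \<bullet> b) *\<^sub>R D [b] (x t))) (at t within I)"
    using smooth_fam_deriv[OF U Suc.prems(2)] x'(1) xU by blast
  ultimately show ?case unfolding Cm_Suc
    by (intro exI[of _ "\<lambda>t. \<Sum>b\<in>Basis. (x' t \<bullet> b) *\<^sub>R D [b] (x t)"]) simp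
qed

lemma interval_not_bot:
  fixes I :: "real set"
  assumes I: "is_interval I" and t: "t \<in> I" and s: "s \<in> I" and st: "s \<noteq> t"
  shows "at t within I \<noteq> bot"
proof -
  have "t islimpt I"
  proof (cases "t < s")
    case True
    have "t islimpt {t..s}" using True by simp
    then show ?thesis using interval_between[OF I t s] islimpt_subset by blast
  next
    case False
    then have "s < t" using st by simp
    have "t islimpt {s..t}" using \<open>s < t\<close> by simp
    then show ?thesis using interval_between[OF I t s] islimpt_subset by blast
  qed
  then show ?thesis using trivial_limit_within by blast
qed

lemma smooth_curve_from_Cm:
  fixes c :: "real \<Rightarrow> 'b::real_normed_vector"
  assumes I: "is_interval I" and all: "\<forall>m. Cm m I c"
  shows "smooth_curve I c"
proof (cases "\<exists>s\<in>I. \<exists>t\<in>I. s \<noteq> t")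
  case False
  have "at t within I = bot" if "t \<in> I" for t
  proof -
    have "I \<subseteq> {t}" using False that by auto
    then have "\<not> t islimpt I" using islimpt_subset[of t I "{t}"] by (auto simp: islimpt_def)
    then show ?thesis using trivial_limit_within by blast
  qed
  then show ?thesis unfolding smooth_curve_def
    by (intro exI[of _ "\<lambda>j. c"]) (auto simp: has_vector_derivative_def intro!: has_derivative_bot bounded_linear_scaleR_left)
next
  case True
  have nb: "at t within I \<noteq> bot" if "t \<in> I" for t
    using True interval_not_bot[OF I that] by metis
  have "\<forall>m. \<exists>E. E 0 = c \<and> (\<forall>j<Suc m. \<forall>t\<in>I. (E j has_vector_derivative E (Suc j) t) (at t within I))"
    using all unfolding Cm_def by blast
  then obtain E where E: "\<And>m. E m 0 = c" "\<And>m j t. j < Suc m \<Longrightarrow> t \<in> I \<Longrightarrow> (E m j has_vector_derivative E m (Suc j) t) (at t within I)"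
    by metis
  have eq: "\<forall>a b. j \<le> a \<longrightarrow> j \<le> b \<longrightarrow> (\<forall>t\<in>I. E a j t = E b j t)" for j
  proof (induction j)
    case 0 then show ?case using E(1) by simp
  next
    case (Suc j)
    show ?case
    proof (intro allI impI ballI)
      fix a b t assume ab: "Suc j \<le> a" "Suc j \<le> b" and t: "t \<in> I"
      have da: "(E a j has_vector_derivative E a (Suc j) t) (at t within I)" using E(2) ab t by simp
      have db: "(E b j has_vector_derivative E b (Suc j) t) (at t within I)" using E(2) ab t by simp
      have "(E b j has_vector_derivative E a (Suc j) t) (at t within I)"
        using has_vector_derivative_weaken[OF da t order_refl] Suc.IH ab by simp
      then show "E a (Suc j) t = E b (Suc j) t"
        using vector_derivative_unique_within[OF nb[OF t] _ db] by blast
    qed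
  qed
  define D where "D j = E j j" for j
  show ?thesis unfolding smooth_curve_def
  proof (intro exI[of _ D] conjI allI ballI)
    show "D 0 = c" by (simp add: D_def E(1))
    fix m t assume t: "t \<in> I"
    have "(E (Suc m) m has_vector_derivative E (Suc m) (Suc m) t) (at t within I)" using E(2) t by simp
    then show "(D m has_vector_derivative D (Suc m) t) (at t within I)"
      unfolding D_def using has_vector_derivative_weaken[OF _ t order_refl, of "E (Suc m) m" _ "E m m"] eq[of m] by simp
  qed
qed



declare transpose_matrix_vector[simp del]

lemma br_add_nu: "br (\<nu> + \<eta>) x y = br \<nu> x y + br \<eta> x y"
  by (simp add: br_def scaleR_add_right sum.distrib)
lemma br_scale_nu: "br (c *\<^sub>R \<nu>) x y = c *\<^sub>R br \<nu> x y"
  by (simp add: br_def scaleR_sum_right mult_ac)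
lemma br_minus_nu: "br (- \<nu>) x y = - br \<nu> x y"
  by (simp add: br_def sum_negf)
lemma br_diff_nu: "br (\<nu> - \<eta>) x y = br \<nu> x y - br \<eta> x y"
  by (simp add: br_def scaleR_diff_right sum_subtractf)
lemma br_zero_nu: "br 0 x y = 0"
  by (simp add: br_def)

lemma br_add_x: "br \<nu> (x + x') y = br \<nu> x y + br \<nu> x' y"
  by (simp add: br_def algebra_simps sum.distrib scaleR_add_left)
lemma br_scale_x: "br \<nu> (c *\<^sub>R x) y = c *\<^sub>R br \<nu> x y"
  by (simp add: br_def scaleR_sum_right mult_ac)
lemma br_add_y: "br \<nu> x (y + y') = br \<nu> x y + br \<nu> x y'"
  by (simp add: br_def algebra_simps sum.distrib scaleR_add_left)
lemma br_scale_y: "br \<nu> x (c *\<^sub>R y) = c *\<^sub>R br \<nu> x y"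
  by (simp add: br_def scaleR_sum_right mult.left_commute)

lemma bilinear_br: "bilinear (br \<nu>)"
  unfolding bilinear_def linear_iff by (simp add: br_add_x br_add_y br_scale_x br_scale_y)

lemma br_minus_x: "br \<nu> (- x) y = - br \<nu> x y"
  using linear_neg[of "\<lambda>x. br \<nu> x y"] bilinear_br unfolding bilinear_def by blast
lemma br_minus_y: "br \<nu> x (- y) = - br \<nu> x y"
  using linear_neg[of "br \<nu> x"] bilinear_br unfolding bilinear_def by blast
lemma br_diff_x: "br \<nu> (x - x') y = br \<nu> x y - br \<nu> x' y"
  using br_add_x[of \<nu> x "- x'"] br_minus_x[of \<nu> x'] by simp
lemma br_diff_y: "br \<nu> x (y - y') = br \<nu> x y - br \<nu> x y'"
  using br_add_y[of \<nu> x y "- y'"] br_minus_y[of \<nu> x y'] by simp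
lemma br_zero_x: "br \<nu> 0 y = 0" by (simp add: br_def)
lemma br_zero_y: "br \<nu> x 0 = 0" by (simp add: br_def)

lemmas br_lin = br_add_nu br_scale_nu br_minus_nu br_diff_nu br_zero_nu br_add_x br_scale_x br_add_y br_scale_y
  br_minus_x br_minus_y br_diff_x br_diff_y br_zero_x br_zero_y

lemma br_axis: "br \<nu> (axis i 1) (axis j 1) = \<nu> $ i $ j"
proof -
  have e: "(axis i 1 $ a * axis j 1 $ b) *\<^sub>R \<nu>$a$b = (if b = j then (if a = i then \<nu>$a$j else 0) else 0)" for a b
    by (simp add: axis_def)
  have "br \<nu> (axis i 1) (axis j 1) = (\<Sum>a\<in>UNIV. \<Sum>b\<in>UNIV. (if b = j then (if a = i then \<nu>$a$j else 0) else 0))"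
    unfolding br_def e ..
  also have "\<dots> = (\<Sum>a\<in>UNIV. (if a = i then \<nu>$a$j else 0))"
    by (subst sum.delta) simp_all
  also have "\<dots> = \<nu> $ i $ j"
    by (subst sum.delta) simp_all
  finally show ?thesis .
qed

lemma mkbr_br: "mkbr (br \<nu>) = \<nu>"
  unfolding mkbr_def br_axis by simp

lemma br_ext: assumes "\<And>x y. br \<nu> x y = br \<eta> x y" shows "\<nu> = \<eta>"
proof -
  have "br \<nu> = br \<eta>" using assms by (intro ext)
  then have "mkbr (br \<nu>) = mkbr (br \<eta>)" by simp
  then show ?thesis by (simp only: mkbr_br)
qed

lemma Basis_vec_axis: "(b::real^'n) \<in> Basis \<Longrightarrow> \<exists>i. b = axis i 1"
  by (auto simp: Basis_vec_def)

lemma br_mkbr: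
  fixes f :: "real^'n::finite \<Rightarrow> real^'n \<Rightarrow> real^'n"
  assumes f: "bilinear f" shows "br (mkbr f) x y = f x y"
proof -
  have "br (mkbr f) = f"
  proof (rule bilinear_eq_stdbasis[OF bilinear_br f])
    fix a b :: "real^'n" assume "a \<in> Basis" "b \<in> Basis"
    then obtain i j where "a = axis i 1" "b = axis j 1" using Basis_vec_axis by metis
    then show "br (mkbr f) a b = f a b" by (simp add: br_axis mkbr_def)
  qed
  then show ?thesis by simp
qed

lemma bilinear_compose3:
  assumes "bilinear g" "linear a" "linear b" "linear c"
  shows "bilinear (\<lambda>x y. a (g (b x) (c y)))"
  using assms unfolding bilinear_def linear_iff by auto

lemma linear_mv: "linear (\<lambda>x. (A::real^'n^'m) *v x)" by simp

lemma bilinear_br_comp: "bilinear (\<lambda>x y. (A::real^'n^'n) *v br \<nu> (B *v x) (C *v y))"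
  by (rule bilinear_compose3[OF bilinear_br]) simp_all

lemma bilinear_piop_inner: "bilinear (\<lambda>x y. A *v br \<nu> x y - br \<nu> (A *v x) y - br \<nu> x (A *v y))"
  unfolding bilinear_def linear_iff
  by (simp add: br_lin algebra_simps matrix_vector_right_distrib matrix_vector_mult_scaleR)

lemma br_piop: "br (piop A \<nu>) x y = A *v br \<nu> x y - br \<nu> (A *v x) y - br \<nu> x (A *v y)"
  unfolding piop_def by (rule br_mkbr[OF bilinear_piop_inner])

definition Tr :: "'n::finite endo \<Rightarrow> 'n endo \<Rightarrow> 'n brkt \<Rightarrow> 'n brkt" where
  "Tr a b \<nu> = mkbr (\<lambda>x y. a *v br \<nu> (b *v x) (b *v y))"

lemma br_Tr: "br (Tr a b \<nu>) x y = a *v br \<nu> (b *v x) (b *v y)"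
  unfolding Tr_def by (rule br_mkbr[OF bilinear_br_comp])



lemma matrix_add_rdistrib': "((A::real^'n^'m) + B) ** C = A ** C + B ** C"
  by (vector matrix_matrix_mult_def sum.distrib[symmetric] field_simps)

lemma bb_mm: "bounded_bilinear (\<lambda>(A::real^'n::finite^'m::finite) (B::real^'p::finite^'n). A ** B)"
proof -
  have "bilinear (\<lambda>(A::real^'n^'m) (B::real^'p^'n). A ** B)"
    unfolding bilinear_def linear_iff
    by (simp add: matrix_add_ldistrib matrix_add_rdistrib' matrix_scalar_ac scalar_matrix_assoc)
  then show ?thesis by (simp add: bilinear_conv_bounded_bilinear)
qed

lemma bb_mv: "bounded_bilinear (\<lambda>(A::real^'n::finite^'m::finite) (x::real^'n). A *v x)"
proof -
  have "bilinear (\<lambda>(A::real^'n^'m) (x::real^'n). A *v x)"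
    unfolding bilinear_def linear_iff
    by (simp add: matrix_vector_right_distrib matrix_vector_mult_add_rdistrib matrix_vector_mult_scaleR)
      (simp add: matrix_vector_mult_def vec_eq_iff sum_distrib_left mult_ac)
  then show ?thesis by (simp add: bilinear_conv_bounded_bilinear)
qed

lemma linear_transpose': "linear (transpose :: real^'n::finite^'m::finite \<Rightarrow> real^'m^'n)"
  unfolding linear_iff by (simp add: transpose_def vec_eq_iff transpose_scalar)

lemma bl_transpose: "bounded_linear (transpose :: real^'n::finite^'m::finite \<Rightarrow> real^'m^'n)"
  using linear_transpose' by (simp add: linear_conv_bounded_linear)

definition B1 :: "'n::finite brkt \<Rightarrow> real^'n \<Rightarrow> real^'n^'n" where
  "B1 \<nu> x = (\<Sum>i\<in>UNIV. x$i *\<^sub>R \<nu>$i)"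
definition B2 :: "real^'n::finite^'n \<Rightarrow> real^'n \<Rightarrow> real^'n" where
  "B2 M y = (\<Sum>j\<in>UNIV. y$j *\<^sub>R M$j)"

lemma br_B: "br \<nu> x y = B2 (B1 \<nu> x) y"
  unfolding br_def B1_def B2_def
  by (subst sum.swap) (simp add: scaleR_sum_right mult.commute)

lemma bb_B1: "bounded_bilinear (B1 :: 'n::finite brkt \<Rightarrow> _)"
proof -
  have "bilinear (B1 :: 'n::finite brkt \<Rightarrow> _)"
    unfolding bilinear_def linear_iff B1_def
    by (simp add: scaleR_add_right scaleR_add_left sum.distrib scaleR_sum_right mult.commute)
  then show ?thesis by (simp add: bilinear_conv_bounded_bilinear)
qed

lemma bb_B2: "bounded_bilinear (B2 :: real^'n::finite^'n \<Rightarrow> _)"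
proof -
  have "bilinear (B2 :: real^'n::finite^'n \<Rightarrow> _)"
    unfolding bilinear_def linear_iff B2_def
    by (simp add: scaleR_add_right scaleR_add_left sum.distrib scaleR_sum_right mult.commute)
  then show ?thesis by (simp add: bilinear_conv_bounded_bilinear)
qed

lemma br_deriv:
  assumes "(\<nu> has_vector_derivative \<nu>') (at t within S)"
    and "(x has_vector_derivative x') (at t within S)"
    and "(y has_vector_derivative y') (at t within S)"
  shows "((\<lambda>t. br (\<nu> t) (x t) (y t)) has_vector_derivative
           (br \<nu>' (x t) (y t) + br (\<nu> t) x' (y t) + br (\<nu> t) (x t) y')) (at t within S)"
proof -
  have "((\<lambda>t. B1 (\<nu> t) (x t)) has_vector_derivative B1 (\<nu> t) x' + B1 \<nu>' (x t)) (at t within S)"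
    by (rule bounded_bilinear.has_vector_derivative[OF bb_B1 assms(1,2)])
  from bounded_bilinear.has_vector_derivative[OF bb_B2 this assms(3)]
  show ?thesis unfolding br_B
    by (simp add: algebra_simps bounded_bilinear.add_left[OF bb_B2])
qed

lemma br_cont_nu: "bounded_linear (\<lambda>\<nu>. br \<nu> x y)"
  unfolding br_B by (intro bounded_linear_compose[OF bounded_bilinear.bounded_linear_left[OF bb_B2]]
      bounded_bilinear.bounded_linear_left[OF bb_B1])

lemma has_vector_derivative_vec_lambda:
  fixes f :: "'i::finite \<Rightarrow> real \<Rightarrow> 'a::euclidean_space"
  assumes "\<And>i. (f i has_vector_derivative f' i) F"
  shows "((\<lambda>t. \<chi> i. f i t) has_vector_derivative (\<chi> i. f' i)) F"
proof -
  have e: "(\<chi> i. g i) = (\<Sum>i\<in>UNIV. axis i (g i))" for g :: "'i \<Rightarrow> 'a"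
    by (simp add: vec_eq_iff axis_def if_distrib sum.delta cong: if_cong)
  have bl: "bounded_linear (axis i :: 'a \<Rightarrow> 'a^'i)" for i
  proof -
    have "linear (axis i :: 'a \<Rightarrow> 'a^'i)"
      unfolding linear_iff by (simp add: axis_def vec_eq_iff)
    then show ?thesis by (simp add: linear_conv_bounded_linear)
  qed
  show ?thesis unfolding e
    by (intro has_vector_derivative_sum bounded_linear.has_vector_derivative[OF bl] assms)
qed

lemma Tr_deriv:
  assumes a: "(a has_vector_derivative a') (at t within S)"
    and b: "(b has_vector_derivative b') (at t within S)"
    and n: "(\<nu> has_vector_derivative \<nu>') (at t within S)"
  shows "((\<lambda>t. Tr (a t) (b t) (\<nu> t)) has_vector_derivative
     mkbr (\<lambda>x y. a' *v br (\<nu> t) (b t *v x) (b t *v y) + a t *v br \<nu>' (b t *v x) (b t *v y)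
              + a t *v br (\<nu> t) (b' *v x) (b t *v y) + a t *v br (\<nu> t) (b t *v x) (b' *v y))) (at t within S)"
proof -
  have bx: "((\<lambda>t. b t *v x) has_vector_derivative b' *v x) (at t within S)" for x
    using bounded_bilinear.has_vector_derivative[OF bb_mv b, of "\<lambda>_. x" 0] by simp
  have "((\<lambda>t. a t *v br (\<nu> t) (b t *v x) (b t *v y)) has_vector_derivative
      a' *v br (\<nu> t) (b t *v x) (b t *v y) + a t *v br \<nu>' (b t *v x) (b t *v y)
              + a t *v br (\<nu> t) (b' *v x) (b t *v y) + a t *v br (\<nu> t) (b t *v x) (b' *v y)) (at t within S)" for x y
    using bounded_bilinear.has_vector_derivative[OF bb_mv a br_deriv[OF n bx bx]]
    by (simp add: algebra_simps matrix_vector_right_distrib)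
  then show ?thesis unfolding Tr_def mkbr_def
    by (intro has_vector_derivative_vec_lambda)
qed



lemma inner_mv: "(x::real^'m::finite) \<bullet> ((A::real^'n::finite^'m) *v y) = (transpose A *v x) \<bullet> y"
  by (simp add: transpose_matrix_vector dot_lmul_matrix)

lemma orth_right:
  fixes k :: "real^'n::finite^'n"
  assumes "transpose k ** k = mat 1" shows "k ** transpose k = mat 1"
proof -
  obtain C where C: "k ** C = mat 1" using matrix_left_right_inverse assms by blast
  have "transpose k = transpose k ** (k ** C)" using C by simp
  also have "\<dots> = C" by (simp add: matrix_mul_assoc assms)
  finally show ?thesis using C by simp
qed

lemma matrix_inv_orth:
  fixes k :: "real^'n::finite^'n"
  assumes o: "transpose k ** k = mat 1" shows "matrix_inv k = transpose k"
proof -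
  have o2: "k ** transpose k = mat 1" using orth_right[OF o] .
  have ex: "\<exists>A'. k ** A' = mat 1 \<and> A' ** k = mat 1" using o o2 by blast
  define A' where "A' = matrix_inv k"
  have A': "k ** A' = mat 1 \<and> A' ** k = mat 1"
    unfolding A'_def matrix_inv_def using someI_ex[OF ex] .
  have "A' = A' ** (k ** transpose k)" using o2 by simp
  also have "\<dots> = transpose k" using A' by (simp add: matrix_mul_assoc)
  finally show ?thesis unfolding A'_def .
qed

lemma act_orth: "transpose k ** k = mat 1 \<Longrightarrow> act k \<nu> = Tr k (transpose k) \<nu>"
  unfolding act_def Tr_def by (simp add: matrix_inv_orth)

lemma mv_scaleR_left: "(c *\<^sub>R (A::real^'n::finite^'m::finite)) *v x = c *\<^sub>R (A *v x)"
  by (simp add: matrix_vector_mult_def vec_eq_iff sum_distrib_left mult_ac)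

lemma bilinear_piop: "bilinear (piop :: 'n::finite endo \<Rightarrow> 'n brkt \<Rightarrow> 'n brkt)"
  unfolding bilinear_def linear_iff
  by (intro conjI allI; rule br_ext; simp add: br_lin br_piop algebra_simps matrix_vector_mult_scaleR mv_scaleR_left)

lemma bb_piop: "bounded_bilinear (piop :: 'n::finite endo \<Rightarrow> 'n brkt \<Rightarrow> 'n brkt)"
  using bilinear_piop by (simp add: bilinear_conv_bounded_bilinear)

definition PopQ :: "'n::{finite,linorder} brkt \<Rightarrow> 'n brkt \<Rightarrow> 'n endo" where
  "PopQ \<nu> \<eta> = matrix (\<lambda>v. \<Sum>(i,j)\<in>{(i,j). i < j}.
      (v \<bullet> br \<nu> (axis i 1) (axis j 1)) *\<^sub>R br \<eta> (axis i 1) (axis j 1))"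

lemma Pop_Q: "Pop \<nu> = PopQ \<nu> \<nu>"
  unfolding Pop_def PopQ_def ..

lemma bb_PopQ: "bounded_bilinear (PopQ :: 'n::{finite,linorder} brkt \<Rightarrow> _)"
proof -
  have "bilinear (PopQ :: 'n::{finite,linorder} brkt \<Rightarrow> _)"
    unfolding bilinear_def linear_iff PopQ_def
    by (simp add: matrix_def vec_eq_iff br_lin inner_add_right scaleR_add_left scaleR_add_right
        sum.distrib case_prod_unfold scaleR_sum_right sum_distrib_left mult_ac)
  then show ?thesis by (simp add: bilinear_conv_bounded_bilinear)
qed

lemma trace_inv:
  fixes q :: "real^'n::finite \<Rightarrow> real^'n \<Rightarrow> real" and k :: "real^'n^'n"
  assumes q: "bilinear q" and k: "k ** transpose k = mat 1"
  shows "(\<Sum>i\<in>UNIV. q (k *v axis i 1) (k *v axis i 1)) = (\<Sum>i\<in>UNIV. q (axis i 1) (axis i 1))"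
proof -
  have col: "k *v axis i 1 = (\<Sum>a\<in>UNIV. k$a$i *\<^sub>R axis a 1)" for i
  proof -
    have c: "(k *v axis i 1) $ a = k$a$i" for a
      by (simp add: matrix_vector_mult_def axis_def if_distrib sum.delta cong: if_cong)
    show ?thesis using basis_expansion[of "k *v axis i 1"] by (simp add: c scalar_mult_eq_scaleR)
  qed
  have qe: "q (k *v axis i 1) (k *v axis i 1) = (\<Sum>a\<in>UNIV. \<Sum>c\<in>UNIV. (k$a$i * k$c$i) * q (axis a 1) (axis c 1))" for i
    unfolding col bilinear_sum[OF q] sum.cartesian_product[symmetric]
    by (simp add: bilinear_lmul[OF q] bilinear_rmul[OF q] mult_ac)
  have kk: "(\<Sum>i\<in>UNIV. k$a$i * k$c$i) = (if a = c then 1 else 0)" for a c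
  proof -
    have "(k ** transpose k) $ a $ c = (\<Sum>i\<in>UNIV. k$a$i * k$c$i)"
      by (simp add: matrix_matrix_mult_def transpose_def)
    then show ?thesis using k by (simp add: mat_def)
  qed
  have "(\<Sum>i\<in>UNIV. q (k *v axis i 1) (k *v axis i 1))
        = (\<Sum>a\<in>UNIV. \<Sum>c\<in>UNIV. (\<Sum>i\<in>UNIV. k$a$i * k$c$i) * q (axis a 1) (axis c 1))"
    unfolding qe sum_distrib_right
    by (subst sum.swap, rule sum.cong[OF refl], subst sum.swap, simp)
  also have "\<dots> = (\<Sum>a\<in>UNIV. q (axis a 1) (axis a 1))"
  proof -
    have "(if a = c then 1 else 0) * q (axis a 1) (axis c 1) = (if c = a then q (axis a 1) (axis a 1) else 0)" for a c :: 'n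
      by auto
    then show ?thesis unfolding kk by (simp add: sum.delta)
  qed
  finally show ?thesis .
qed

definition Pfull :: "'n::finite brkt \<Rightarrow> real^'n \<Rightarrow> real^'n" where
  "Pfull \<nu> v = (\<Sum>i\<in>UNIV. \<Sum>j\<in>UNIV. (v \<bullet> br \<nu> (axis i 1) (axis j 1)) *\<^sub>R br \<nu> (axis i 1) (axis j 1))"

lemma Pfull_inner: "Pfull \<nu> v \<bullet> u = (\<Sum>i\<in>UNIV. \<Sum>j\<in>UNIV. (v \<bullet> br \<nu> (axis i 1) (axis j 1)) * (br \<nu> (axis i 1) (axis j 1) \<bullet> u))"
  unfolding Pfull_def by (simp add: inner_sum_left)

lemma skew_nu:
  assumes "is_bracket \<nu>" shows "\<nu> $ j $ i = - \<nu> $ i $ j"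
  using assms[unfolded is_bracket_def, rule_format, of "axis j 1" "axis i 1"] by (simp add: br_axis)

lemma neg_self_zero:
  fixes x :: "'a::real_vector" assumes h: "x = - x" shows "x = 0"
proof -
  have "2 *\<^sub>R x = x + x" by (rule scaleR_2)
  also have "\<dots> = x + - x" by (subst (2) h) (rule refl)
  also have "\<dots> = 0" by simp
  finally show ?thesis by simp
qed

lemma matrix_apply_lin: "linear f \<Longrightarrow> matrix f *v v = f (v::real^'n::finite)"
  using matrix_vector_mul(2)[of f] by metis

lemma Pop_skew:
  fixes \<nu> :: "'n::{finite,linorder} brkt"
  assumes sk: "is_bracket \<nu>"
  shows "Pop \<nu> *v v = (1/2) *\<^sub>R Pfull \<nu> v"
proof -
  define g where "g p = (v \<bullet> \<nu> $ fst p $ snd p) *\<^sub>R \<nu> $ fst p $ snd p" for p :: "'n \<times> 'n"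
  have lin: "linear (\<lambda>v. \<Sum>(i,j)\<in>{(i,j). i < j}. (v \<bullet> br \<nu> (axis i 1) (axis j 1)) *\<^sub>R br \<nu> (axis i 1) (axis j 1))"
    unfolding linear_iff by (simp add: inner_add_left scaleR_add_left sum.distrib case_prod_unfold scaleR_sum_right)
  have P: "Pop \<nu> *v v = (\<Sum>p\<in>{(i,j). i < j}. g p)"
    unfolding Pop_def matrix_apply_lin[OF lin] by (simp add: g_def br_axis case_prod_unfold)
  define Slt where "Slt = {(i::'n,j). i < j}"
  define Sgt where "Sgt = {(i::'n,j). j < i}"
  define Seq where "Seq = {(i::'n,j). i = j}"
  have U: "UNIV = (Slt \<union> Sgt) \<union> Seq" unfolding Slt_def Sgt_def Seq_def by auto
  have d1: "Slt \<inter> Sgt = {}" unfolding Slt_def Sgt_def by auto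
  have d2: "(Slt \<union> Sgt) \<inter> Seq = {}" unfolding Slt_def Sgt_def Seq_def by auto
  have gsw: "g (prod.swap p) = g p" for p
    using skew_nu[OF sk, of "fst p" "snd p"] by (simp add: g_def)
  have z: "\<nu> $ a $ a = 0" for a
    using skew_nu[OF sk, of a a] by (rule neg_self_zero)
  have g0: "p \<in> Seq \<Longrightarrow> g p = 0" for p
    by (auto simp: g_def Seq_def z)
  have sw: "Sgt = prod.swap ` Slt" unfolding Sgt_def Slt_def by auto
  have "(\<Sum>p\<in>Sgt. g p) = (\<Sum>p\<in>Slt. g (prod.swap p))"
    unfolding sw using sum.reindex[of prod.swap Slt g] by (simp add: comp_def)
  then have sgt: "(\<Sum>p\<in>Sgt. g p) = (\<Sum>p\<in>Slt. g p)" by (simp only: gsw)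
  have "(\<Sum>p\<in>UNIV. g p) = (\<Sum>p\<in>Slt \<union> Sgt. g p) + (\<Sum>p\<in>Seq. g p)"
    unfolding U by (rule sum.union_disjoint[OF _ _ d2]) simp_all
  also have "(\<Sum>p\<in>Slt \<union> Sgt. g p) = (\<Sum>p\<in>Slt. g p) + (\<Sum>p\<in>Sgt. g p)"
    by (rule sum.union_disjoint[OF _ _ d1]) simp_all
  also have "(\<Sum>p\<in>Seq. g p) = 0" using g0 by simp
  finally have "(\<Sum>p\<in>UNIV. g p) = 2 *\<^sub>R (\<Sum>p\<in>Slt. g p)" using sgt by (simp add: scaleR_2)
  moreover have "(\<Sum>p\<in>UNIV. g p) = Pfull \<nu> v"
    unfolding Pfull_def br_axis g_def UNIV_Times_UNIV[symmetric] sum.cartesian_product by (simp add: case_prod_unfold)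
  ultimately show ?thesis unfolding P Slt_def by simp
qed



lemma bilinear_qform:
  "bilinear (\<lambda>y y'. (v \<bullet> br \<nu> x y) * (br \<nu> x y' \<bullet> u))"
  "bilinear (\<lambda>x x'. (v \<bullet> br \<nu> x y) * (br \<nu> x' y \<bullet> u))"
  unfolding bilinear_def linear_iff
  by (simp_all add: br_lin inner_add_left inner_add_right algebra_simps)

lemma Pfull_Tr:
  fixes k :: "real^'n::finite^'n"
  assumes o: "transpose k ** k = mat 1"
  shows "Pfull (Tr k (transpose k) \<nu>) v = k *v Pfull \<nu> (transpose k *v v)"
proof -
  have o': "transpose k ** transpose (transpose k) = mat 1" using o by simp
  define v' where "v' = transpose k *v v"
  show ?thesis
  proof (rule vector_eq_rdot[THEN iffD1], intro allI)
    fix u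
    define u' where "u' = transpose k *v u"
    define F where "F x y = (v' \<bullet> br \<nu> x y) * (br \<nu> x y \<bullet> u')" for x y
    have "Pfull (Tr k (transpose k) \<nu>) v \<bullet> u = (\<Sum>i\<in>UNIV. \<Sum>j\<in>UNIV. F (transpose k *v axis i 1) (transpose k *v axis j 1))"
      unfolding Pfull_inner br_Tr F_def v'_def u'_def
      by (simp add: inner_mv inner_commute[of "k *v _"])
    also have "\<dots> = (\<Sum>i\<in>UNIV. \<Sum>j\<in>UNIV. F (transpose k *v axis i 1) (axis j 1))"
      unfolding F_def by (rule sum.cong[OF refl], rule trace_inv[OF bilinear_qform(1) o'])
    also have "\<dots> = (\<Sum>j\<in>UNIV. \<Sum>i\<in>UNIV. F (transpose k *v axis i 1) (axis j 1))"
      by (rule sum.swap)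
    also have "\<dots> = (\<Sum>j\<in>UNIV. \<Sum>i\<in>UNIV. F (axis i 1) (axis j 1))"
      unfolding F_def by (rule sum.cong[OF refl], rule trace_inv[OF bilinear_qform(2) o'])
    also have "\<dots> = (\<Sum>i\<in>UNIV. \<Sum>j\<in>UNIV. F (axis i 1) (axis j 1))"
      by (rule sum.swap)
    also have "\<dots> = Pfull \<nu> v' \<bullet> u'" unfolding Pfull_inner F_def ..
    also have "\<dots> = (k *v Pfull \<nu> v') \<bullet> u" unfolding u'_def
      by (simp add: inner_mv inner_commute[of "k *v _"] inner_commute[of "Pfull \<nu> v'"])
    finally show "Pfull (Tr k (transpose k) \<nu>) v \<bullet> u = (k *v Pfull \<nu> (transpose k *v v)) \<bullet> u"
      unfolding v'_def .
  qed
qed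

lemma mv_neg: "(A::real^'n::finite^'m::finite) *v (- x) = - (A *v x)"
  using matrix_vector_mult_diff_distrib[of A 0 x] by simp

lemma is_bracket_Tr: assumes "is_bracket \<nu>" shows "is_bracket (Tr a b \<nu>)"
  unfolding is_bracket_def br_Tr
proof (intro allI)
  fix x y
  have "br \<nu> (b *v x) (b *v y) = - br \<nu> (b *v y) (b *v x)" using assms unfolding is_bracket_def by blast
  then show "a *v br \<nu> (b *v x) (b *v y) = - (a *v br \<nu> (b *v y) (b *v x))" by (simp only: mv_neg)
qed

lemma Pop_Tr:
  fixes \<nu> :: "'n::{finite,linorder} brkt" and k :: "'n endo"
  assumes o: "transpose k ** k = mat 1" and sk: "is_bracket \<nu>"
  shows "Pop (Tr k (transpose k) \<nu>) = k ** Pop \<nu> ** transpose k"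
  unfolding matrix_eq
proof
  fix v
  have "(k ** Pop \<nu> ** transpose k) *v v = k *v (Pop \<nu> *v (transpose k *v v))"
    by (simp add: matrix_vector_mul_assoc matrix_mul_assoc)
  also have "\<dots> = k *v ((1/2) *\<^sub>R Pfull \<nu> (transpose k *v v))" by (simp only: Pop_skew[OF sk])
  also have "\<dots> = (1/2) *\<^sub>R (k *v Pfull \<nu> (transpose k *v v))" by (rule matrix_vector_mult_scaleR)
  also have "\<dots> = (1/2) *\<^sub>R Pfull (Tr k (transpose k) \<nu>) v" by (simp only: Pfull_Tr[OF o])
  also have "\<dots> = Pop (Tr k (transpose k) \<nu>) *v v" by (simp only: Pop_skew[OF is_bracket_Tr[OF sk]])
  finally show "Pop (Tr k (transpose k) \<nu>) *v v = (k ** Pop \<nu> ** transpose k) *v v" by simp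
qed

lemma Pfull_J:
  fixes J :: "real^'n::finite^'n"
  assumes o: "transpose J ** J = mat 1" and C: "\<forall>x y. br \<nu> (J *v x) y = J *v br \<nu> x y"
  shows "Pfull \<nu> v = J *v Pfull \<nu> (transpose J *v v)"
proof (rule vector_eq_rdot[THEN iffD1], intro allI)
  fix u
  have o': "J ** transpose J = mat 1" using orth_right[OF o] .
  define F where "F x y = (v \<bullet> br \<nu> x y) * (br \<nu> x y \<bullet> u)" for x y
  have "Pfull \<nu> v \<bullet> u = (\<Sum>j\<in>UNIV. \<Sum>i\<in>UNIV. F (axis i 1) (axis j 1))"
    unfolding Pfull_inner F_def by (rule sum.swap)
  also have "\<dots> = (\<Sum>j\<in>UNIV. \<Sum>i\<in>UNIV. F (J *v axis i 1) (axis j 1))"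
    unfolding F_def by (rule sum.cong[OF refl], rule trace_inv[OF bilinear_qform(2) o', symmetric])
  also have "\<dots> = (\<Sum>i\<in>UNIV. \<Sum>j\<in>UNIV. F (J *v axis i 1) (axis j 1))"
    by (rule sum.swap)
  also have "\<dots> = Pfull \<nu> (transpose J *v v) \<bullet> (transpose J *v u)"
    unfolding Pfull_inner F_def C[rule_format]
    by (simp add: inner_mv inner_commute[of "J *v _"])
  also have "\<dots> = (J *v Pfull \<nu> (transpose J *v v)) \<bullet> u"
    by (simp add: inner_mv inner_commute[of "J *v _"] inner_commute[of "Pfull \<nu> _"])
  finally show "Pfull \<nu> v \<bullet> u = (J *v Pfull \<nu> (transpose J *v v)) \<bullet> u" .
qed

lemma Pop_J:
  fixes J :: "'n::{finite,linorder} endo"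
  assumes o: "transpose J ** J = mat 1" and C: "\<nu> \<in> Cset J"
  shows "Pop \<nu> ** J = J ** Pop \<nu>"
  unfolding matrix_eq
proof
  fix v
  have sk: "is_bracket \<nu>" and c: "\<forall>x y. br \<nu> (J *v x) y = J *v br \<nu> x y"
    using C unfolding Cset_def by auto
  have "Pfull \<nu> (J *v v) = J *v Pfull \<nu> (transpose J *v (J *v v))" by (rule Pfull_J[OF o c])
  also have "transpose J *v (J *v v) = v" by (simp add: matrix_vector_mul_assoc o)
  finally have "Pfull \<nu> (J *v v) = J *v Pfull \<nu> v" .
  then show "(Pop \<nu> ** J) *v v = (J ** Pop \<nu>) *v v"
    unfolding matrix_vector_mul_assoc[symmetric] Pop_skew[OF sk]
    by (simp add: matrix_vector_mult_scaleR)
qed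



lemma bound_on_compact:
  fixes M :: "'a::metric_space \<Rightarrow> 'b::real_normed_vector"
  assumes "continuous_on S M" "compact S"
  shows "\<exists>B\<ge>0. \<forall>s\<in>S. norm (M s) \<le> B"
proof -
  have "bounded (M ` S)" using compact_imp_bounded[OF compact_continuous_image[OF assms]] .
  then obtain B where "B > 0" "\<forall>x\<in>M ` S. norm x \<le> B" unfolding bounded_pos by blast
  then show ?thesis by (intro exI[of _ B]) auto
qed

lemma lin_ode:
  fixes M :: "real \<Rightarrow> 'a::euclidean_space" and prod :: "'a \<Rightarrow> 'b::euclidean_space \<Rightarrow> 'b"
  assumes bb: "bounded_bilinear prod" and I: "is_interval I" and t0: "t0 \<in> I"
    and Mc: "continuous_on I M"
  shows "\<exists>x. x t0 = x0 \<and> (\<forall>t\<in>I. (x has_vector_derivative prod (M t) (x t)) (at t within I))"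
proof (rule ode_exists_interval[OF I t0])
  fix a b :: real and y :: "real \<Rightarrow> 'b" assume ab: "{a..b} \<subseteq> I" and y: "continuous_on {a..b} y"
  show "continuous_on {a..b} (\<lambda>s. prod (M s) (y s))"
    using bounded_bilinear.continuous_on[OF bb continuous_on_subset[OF Mc ab] y] .
next
  fix a b :: real assume ab: "{a..b} \<subseteq> I"
  obtain Bm where Bm: "Bm \<ge> 0" "\<forall>s\<in>{a..b}. norm (M s) \<le> Bm"
    using bound_on_compact[OF continuous_on_subset[OF Mc ab] compact_Icc] by blast
  obtain K where K: "K > 0" "\<forall>a b. norm (prod a b) \<le> norm a * norm b * K"
    using bounded_bilinear.pos_bounded[OF bb] by blast
  show "\<exists>L. \<forall>s\<in>{a..b}. \<forall>x y. norm (prod (M s) x - prod (M s) y) \<le> L * norm (x - y)"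
  proof (intro exI[of _ "Bm * K"] ballI allI)
    fix s x y assume s: "s \<in> {a..b}"
    have "norm (prod (M s) x - prod (M s) y) = norm (prod (M s) (x - y))"
      by (simp add: bounded_bilinear.diff_right[OF bb])
    also have "\<dots> \<le> norm (M s) * norm (x - y) * K" using K by blast
    also have "\<dots> \<le> Bm * norm (x - y) * K"
      using Bm s K by (intro mult_right_mono) auto
    finally show "norm (prod (M s) x - prod (M s) y) \<le> Bm * K * norm (x - y)" by (simp add: mult_ac)
  qed
qed

lemma local_norm_bound:
  fixes M :: "real \<Rightarrow> 'b::real_normed_vector"
  assumes "continuous_on I M" "t \<in> I"
  shows "\<exists>\<delta>>0. \<forall>s\<in>I. dist s t < \<delta> \<longrightarrow> norm (M s) \<le> norm (M t) + 1"
proof -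
  obtain \<delta> where "\<delta> > 0" "\<forall>s\<in>I. dist s t < \<delta> \<longrightarrow> dist (M s) (M t) < 1"
    using assms unfolding continuous_on_iff by (meson zero_less_one)
  then show ?thesis
  proof (intro exI[of _ \<delta>] conjI ballI impI)
    fix s assume "s \<in> I" "dist s t < \<delta>"
    then have "norm (M s - M t) < 1" using \<open>\<forall>s\<in>I. dist s t < \<delta> \<longrightarrow> dist (M s) (M t) < 1\<close> by (simp add: dist_norm)
    moreover have "norm (M s) \<le> norm (M s - M t) + norm (M t)" using norm_triangle_sub[of "M s" "M t"] by simp
    ultimately show "norm (M s) \<le> norm (M t) + 1" by simp
  qed (use \<open>\<delta> > 0\<close> in simp)
qed

lemma mm_comm_inv:
  fixes A B :: "real^'n::finite^'n"
  assumes "A ** B = mat 1" shows "B ** A = mat 1"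
proof -
  obtain C where C: "B ** C = mat 1" using matrix_left_right_inverse assms by blast
  have "A = A ** (B ** C)" using C by simp
  also have "\<dots> = C" by (simp add: matrix_mul_assoc assms)
  finally show ?thesis using C by simp
qed

lemma cont_br3: "continuous_on UNIV (\<lambda>\<nu>. br \<nu> (f \<nu>) (g \<nu>))" if "continuous_on UNIV f" "continuous_on UNIV g"
  unfolding br_B
  by (intro bounded_bilinear.continuous_on[OF bb_B2] bounded_bilinear.continuous_on[OF bb_B1] that continuous_on_id)

lemma cont_br_const: "continuous_on UNIV (\<lambda>\<nu>. br \<nu> x y)"
  by (rule linear_continuous_on[OF br_cont_nu])

lemma Cset_closed: "closed (Cset J)"
proof -
  have c1: "closed {\<nu>. \<forall>x y. br \<nu> x y = - br \<nu> y x}"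
  proof (intro closed_Collect_all closed_Collect_eq)
    fix x y show "continuous_on UNIV (\<lambda>\<nu>. br \<nu> x y)" by (rule cont_br_const)
    show "continuous_on UNIV (\<lambda>\<nu>. - br \<nu> y x)" by (intro continuous_on_minus cont_br_const)
  qed
  have c2: "closed {\<nu>. \<forall>x y z. br \<nu> x (br \<nu> y z) + br \<nu> y (br \<nu> z x) + br \<nu> z (br \<nu> x y) = 0}"
  proof (intro closed_Collect_all closed_Collect_eq)
    fix x y z
    show "continuous_on UNIV (\<lambda>\<nu>. br \<nu> x (br \<nu> y z) + br \<nu> y (br \<nu> z x) + br \<nu> z (br \<nu> x y))"
      by (intro continuous_on_add cont_br3 cont_br_const continuous_on_const)
  qed (rule continuous_on_const)
  have c3: "closed {\<nu>. \<forall>x y. br \<nu> (J *v x) y = J *v br \<nu> x y}"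
  proof (intro closed_Collect_all closed_Collect_eq)
    fix x y
    show "continuous_on UNIV (\<lambda>\<nu>. br \<nu> (J *v x) y)" by (rule cont_br_const)
    show "continuous_on UNIV (\<lambda>\<nu>. J *v br \<nu> x y)"
      by (rule bounded_linear.continuous_on[OF bounded_bilinear.bounded_linear_right[OF bb_mv] cont_br_const])
  qed
  show ?thesis unfolding Cset_def is_bracket_def
    by (intro closed_Collect_conj c1 c2 c3)
qed

lemma smooth_lipschitz_local:
  fixes D :: "'a::euclidean_space list \<Rightarrow> 'a \<Rightarrow> 'b::real_normed_vector"
  assumes U: "open U" and sf: "smooth_fam U D" and y0: "y0 \<in> U"
  shows "\<exists>r>0. \<exists>L. cball y0 r \<subseteq> U \<and> (\<forall>x\<in>cball y0 r. \<forall>y\<in>cball y0 r. norm (D [] x - D [] y) \<le> L * norm (x - y))"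
proof -
  obtain r where r: "r > 0" "cball y0 r \<subseteq> U" using U y0 open_contains_cball by blast
  have cc: "continuous_on (cball y0 r) (\<lambda>x. \<Sum>b\<in>Basis. norm (D [b] x))"
    using sf r(2) unfolding smooth_fam_def by (intro continuous_intros) (auto intro: continuous_on_subset)
  obtain M where M: "M \<ge> 0" "\<forall>x\<in>cball y0 r. norm (\<Sum>b\<in>Basis. norm (D [b] x)) \<le> M"
    using bound_on_compact[OF cc compact_cball] by blast
  have der: "(D [] has_derivative (\<lambda>v. \<Sum>b\<in>Basis. (v \<bullet> b) *\<^sub>R D [b] x)) (at x within cball y0 r)"
    if "x \<in> cball y0 r" for x
  proof -
    have xU: "x \<in> U" using that r(2) by blast
    have "(D [] has_derivative (\<lambda>v. \<Sum>b\<in>Basis. (v \<bullet> b) *\<^sub>R D [b] x)) (at x)"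
      by (rule partials_frechet[OF U xU]) (use sf in \<open>auto simp: smooth_fam_def\<close>)
    then show ?thesis by (rule has_derivative_at_withinI)
  qed
  have on: "onorm (\<lambda>v. \<Sum>b\<in>Basis. (v \<bullet> b) *\<^sub>R D [b] x) \<le> M" if "x \<in> cball y0 r" for x
  proof (rule onorm_le)
    fix v :: 'a
    have "norm (\<Sum>b\<in>Basis. (v \<bullet> b) *\<^sub>R D [b] x) \<le> (\<Sum>b\<in>Basis. norm ((v \<bullet> b) *\<^sub>R D [b] x))"
      by (rule norm_sum)
    also have "\<dots> \<le> (\<Sum>b\<in>Basis. norm v * norm (D [b] x))"
      by (intro sum_mono) (auto intro: mult_right_mono Basis_le_norm)
    also have "\<dots> = norm v * (\<Sum>b\<in>Basis. norm (D [b] x))" by (simp add: sum_distrib_left)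
    also have "\<dots> \<le> norm v * M"
    proof (intro mult_left_mono)
      have "\<bar>\<Sum>b\<in>Basis. norm (D [b] x)\<bar> \<le> M" using M that by auto
      then show "(\<Sum>b\<in>Basis. norm (D [b] x)) \<le> M" by linarith
    qed simp
    finally show "norm (\<Sum>b\<in>Basis. (v \<bullet> b) *\<^sub>R D [b] x) \<le> M * norm v" by (simp add: mult.commute)
  qed
  have "\<forall>x\<in>cball y0 r. \<forall>y\<in>cball y0 r. norm (D [] x - D [] y) \<le> M * norm (x - y)"
  proof (intro ballI)
    fix x y assume xy: "x \<in> cball y0 r" "y \<in> cball y0 r"
    show "norm (D [] x - D [] y) \<le> M * norm (x - y)"
      by (rule differentiable_bound[OF convex_cball der on xy]) auto
  qed
  then show ?thesis using r by blast
qed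



lemma interval_ball:
  fixes I :: "real set"
  assumes "is_interval I" shows "is_interval {s\<in>I. dist s t < \<delta>}"
  using assms unfolding is_interval_1 by (auto simp: dist_real_def)

lemma mm_neg_left: "(- A) ** (B::real^'n::finite^'m::finite) = - (A ** (B::real^'n^'m))"
  using bounded_bilinear.minus_left[OF bb_mm] by blast
lemma mm_neg_right: "(A::real^'n::finite^'m::finite) ** (- B) = - (A ** (B::real^'p::finite^'n))"
  using bounded_bilinear.minus_right[OF bb_mm] by blast
lemma mm_diff_left: "(A - A') ** (B::real^'n::finite^'m::finite) = A ** B - A' ** (B::real^'n^'m)"
  using bounded_bilinear.diff_left[OF bb_mm] by blast
lemma mm_diff_right: "(A::real^'n::finite^'m::finite) ** (B - B') = A ** B - A ** (B'::real^'p::finite^'n)"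
  using bounded_bilinear.diff_right[OF bb_mm] by blast

lemma mv_neg_left: "(- A) *v (x::real^'n::finite) = - ((A::real^'n^'m::finite) *v x)"
  by (simp add: matrix_vector_mult_def vec_eq_iff sum_negf)

lemma Tr_id: "Tr (mat 1) (mat 1) \<nu> = \<nu>"
  by (rule br_ext) (simp add: br_Tr)

lemma mv_inv_cancel: "g ** h = mat 1 \<Longrightarrow> g *v (h *v x) = (x::real^'n::finite)"
  by (simp add: matrix_vector_mul_assoc)

lemma Tr_C:
  fixes J :: "'n::finite endo"
  assumes C: "\<nu>1 \<in> Cset J" and gh: "g ** h = mat 1"
    and gJ: "g ** J = J ** g" and hJ: "h ** J = J ** h"
  shows "Tr h g \<nu>1 \<in> Cset J"
proof -
  have sk: "is_bracket \<nu>1" and jac: "\<forall>x y z. br \<nu>1 x (br \<nu>1 y z) + br \<nu>1 y (br \<nu>1 z x) + br \<nu>1 z (br \<nu>1 x y) = 0"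
    and cJ: "\<forall>x y. br \<nu>1 (J *v x) y = J *v br \<nu>1 x y"
    using C unfolding Cset_def by auto
  have "is_bracket (Tr h g \<nu>1)" by (rule is_bracket_Tr[OF sk])
  moreover have "br (Tr h g \<nu>1) x (br (Tr h g \<nu>1) y z) + br (Tr h g \<nu>1) y (br (Tr h g \<nu>1) z x)
      + br (Tr h g \<nu>1) z (br (Tr h g \<nu>1) x y) = 0" for x y z
  proof -
    have "br (Tr h g \<nu>1) x (br (Tr h g \<nu>1) y z) + br (Tr h g \<nu>1) y (br (Tr h g \<nu>1) z x)
      + br (Tr h g \<nu>1) z (br (Tr h g \<nu>1) x y)
      = h *v (br \<nu>1 (g *v x) (br \<nu>1 (g *v y) (g *v z)) + br \<nu>1 (g *v y) (br \<nu>1 (g *v z) (g *v x))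
          + br \<nu>1 (g *v z) (br \<nu>1 (g *v x) (g *v y)))"
      by (simp add: br_Tr mv_inv_cancel[OF gh] matrix_vector_right_distrib)
    also have "\<dots> = 0" using jac by simp
    finally show ?thesis .
  qed
  moreover have "br (Tr h g \<nu>1) (J *v x) y = J *v br (Tr h g \<nu>1) x y" for x y
  proof -
    have gx: "g *v (J *v x) = J *v (g *v x)" by (simp add: matrix_vector_mul_assoc gJ)
    have "br (Tr h g \<nu>1) (J *v x) y = h *v br \<nu>1 (J *v (g *v x)) (g *v y)"
      by (simp only: br_Tr gx)
    also have "\<dots> = h *v (J *v br \<nu>1 (g *v x) (g *v y))" by (simp only: cJ[rule_format])
    also have "\<dots> = J *v (h *v br \<nu>1 (g *v x) (g *v y))" by (simp only: matrix_vector_mul_assoc hJ)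
    also have "\<dots> = J *v br (Tr h g \<nu>1) x y" by (simp only: br_Tr)
    finally show ?thesis .
  qed
  ultimately show ?thesis unfolding Cset_def by blast
qed

lemma Tr_flow_deriv:
  assumes h: "(h has_vector_derivative - (Ah ** h t)) (at t within S)"
    and g: "(g has_vector_derivative g t ** Ah) (at t within S)"
  shows "((\<lambda>t. Tr (h t) (g t) \<nu>1) has_vector_derivative - piop Ah (Tr (h t) (g t) \<nu>1)) (at t within S)"
proof -
  have e: "mkbr (\<lambda>x y. - (Ah ** h t) *v br \<nu>1 (g t *v x) (g t *v y) + h t *v br 0 (g t *v x) (g t *v y)
              + h t *v br \<nu>1 ((g t ** Ah) *v x) (g t *v y) + h t *v br \<nu>1 (g t *v x) ((g t ** Ah) *v y))
       = - piop Ah (Tr (h t) (g t) \<nu>1)"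
  proof -
    have "mkbr (\<lambda>x y. - (Ah ** h t) *v br \<nu>1 (g t *v x) (g t *v y) + h t *v br 0 (g t *v x) (g t *v y)
              + h t *v br \<nu>1 ((g t ** Ah) *v x) (g t *v y) + h t *v br \<nu>1 (g t *v x) ((g t ** Ah) *v y))
        = mkbr (br (- piop Ah (Tr (h t) (g t) \<nu>1)))"
      by (rule arg_cong[where f=mkbr], intro ext)
        (simp add: br_piop br_Tr br_lin mv_neg_left matrix_vector_mul_assoc[symmetric] mv_neg algebra_simps)
    then show ?thesis by (simp only: mkbr_br)
  qed
  show ?thesis
    using Tr_deriv[OF h g has_vector_derivative_const[of \<nu>1]] unfolding e .
qed

lemma Pop_lip: "\<exists>K>0. \<forall>a b. norm (Pop a - Pop (b::'n::{finite,linorder} brkt)) \<le> K * (norm a + norm b) * norm (a - b)"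
proof -
  obtain K where K: "K > 0" "\<forall>a b::'n brkt. norm (PopQ a b) \<le> norm a * norm b * (K::real)"
    using bounded_bilinear.pos_bounded[OF bb_PopQ] by blast
  show ?thesis
  proof (intro exI[of _ K] conjI allI K(1))
    fix a b :: "'n brkt"
    have "Pop a - Pop b = PopQ (a - b) a + PopQ b (a - b)"
      unfolding Pop_Q by (simp add: bounded_bilinear.diff_left[OF bb_PopQ] bounded_bilinear.diff_right[OF bb_PopQ])
    then have "norm (Pop a - Pop b) \<le> norm (PopQ (a - b) a) + norm (PopQ b (a - b))"
      by (simp add: norm_triangle_ineq)
    also have "\<dots> \<le> norm (a - b) * norm a * K + norm b * norm (a - b) * K"
      using K(2) by (intro add_mono) auto
    also have "\<dots> = K * (norm a + norm b) * norm (a - b)" by (simp add: algebra_simps)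
    finally show "norm (Pop a - Pop b) \<le> K * (norm a + norm b) * norm (a - b)" .
  qed
qed



lemma cont_from_deriv:
  assumes "\<forall>t\<in>I. (f has_vector_derivative f' t) (at t within I)"
  shows "continuous_on I f"
  unfolding continuous_on_eq_continuous_within using assms has_vector_derivative_continuous by blast

lemma C_local:
  fixes J :: "'n::{finite,linorder} endo" and S :: "'n brkt \<Rightarrow> 'n endo" and \<nu> :: "real \<Rightarrow> 'n brkt"
  assumes J_cplx: "J ** J = - mat 1" and J_orth: "transpose J ** J = mat 1"
    and U: "open U" "Cset J \<subseteq> U" and sf: "smooth_fam U D" and DS: "D [] = S"
    and S_u: "\<forall>\<xi>\<in>Cset J. S \<xi> \<in> ualg J"
    and I: "is_interval I"
    and flow: "\<forall>t\<in>I. (\<nu> has_vector_derivative - piop (Pop (\<nu> t) - S (\<nu> t)) (\<nu> t)) (at t within I)"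
    and t1: "t1 \<in> I" and C1: "\<nu> t1 \<in> Cset J"
  shows "\<exists>\<delta>>0. \<forall>s\<in>I. dist s t1 < \<delta> \<longrightarrow> \<nu> s \<in> Cset J"
proof -
  define \<nu>1 where "\<nu>1 = \<nu> t1"
  have \<nu>c: "continuous_on I \<nu>" using cont_from_deriv[OF flow] .
  have Sc: "continuous_on U S" using sf DS unfolding smooth_fam_def by metis
  obtain r Ls where r: "r > 0" "cball \<nu>1 r \<subseteq> U"
    and Ls: "\<forall>x\<in>cball \<nu>1 r. \<forall>y\<in>cball \<nu>1 r. norm (S x - S y) \<le> Ls * norm (x - y)"
  proof -
    have "\<nu>1 \<in> U" using C1 U(2) unfolding \<nu>1_def by blast
    from smooth_lipschitz_local[OF U(1) sf this] show ?thesis unfolding DS using that by blast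
  qed
  obtain \<delta>1 where d1: "\<delta>1 > 0" "\<forall>s\<in>I. dist s t1 < \<delta>1 \<longrightarrow> dist (\<nu> s) \<nu>1 < r"
    using \<nu>c t1 r(1) unfolding continuous_on_iff \<nu>1_def by blast
  define I1 where "I1 = {s\<in>I. dist s t1 < \<delta>1}"
  have I1: "is_interval I1" unfolding I1_def by (rule interval_ball[OF I])
  have t1I1: "t1 \<in> I1" using t1 d1 unfolding I1_def by simp
  have I1I: "I1 \<subseteq> I" unfolding I1_def by auto
  have \<nu>ball: "\<nu> s \<in> cball \<nu>1 r" if "s \<in> I1" for s
    using d1 that unfolding I1_def by (auto simp: dist_commute less_imp_le)
  define A where "A s = Pop (\<nu> s) - S (\<nu> s)" for s
  define Ah where "Ah s = (1/2) *\<^sub>R (A s - J ** A s ** J)" for s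
  have Ac: "continuous_on I1 A"
  proof -
    have "continuous_on I1 \<nu>" using \<nu>c I1I continuous_on_subset by blast
    moreover have "continuous_on I1 (\<lambda>s. S (\<nu> s))"
      using continuous_on_compose2[OF Sc \<open>continuous_on I1 \<nu>\<close>] \<nu>ball r(2) by blast
    ultimately show ?thesis unfolding A_def Pop_Q
      by (intro continuous_on_diff bounded_bilinear.continuous_on[OF bb_PopQ])
  qed
  have Ahc: "continuous_on I1 Ah"
    unfolding Ah_def
    by (intro continuous_on_scaleR continuous_on_const continuous_on_diff Ac
        bounded_bilinear.continuous_on[OF bb_mm])
  obtain h where h0: "h t1 = mat 1" and hd: "\<forall>s\<in>I1. (h has_vector_derivative (- Ah s) ** h s) (at s within I1)"
    using lin_ode[OF bb_mm I1 t1I1, of "\<lambda>s. - Ah s" "mat 1"] continuous_on_minus[OF Ahc] by blast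
  obtain g where g0: "g t1 = mat 1" and gd: "\<forall>s\<in>I1. (g has_vector_derivative g s ** Ah s) (at s within I1)"
    using lin_ode[OF bounded_bilinear.flip[OF bb_mm] I1 t1I1 Ahc, of "mat 1"] by blast
  obtain Km where Km: "Km > 0" "\<forall>(a::'n endo) (b::'n endo). norm (a ** b) \<le> norm a * norm b * Km"
    using bounded_bilinear.pos_bounded[OF bb_mm] by blast
  have gh: "\<forall>s\<in>I1. g s ** h s = mat 1"
  proof -
    have "\<forall>s\<in>I1. (\<lambda>s. g s ** h s - mat 1) s = 0"
    proof (rule gronwall_zero[OF I1 t1I1, where z'="\<lambda>s. 0"])
      show "g t1 ** h t1 - mat 1 = 0" using g0 h0 by simp
      show "\<forall>s\<in>I1. ((\<lambda>s. g s ** h s - mat 1) has_vector_derivative 0) (at s within I1)"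
      proof
        fix s assume s: "s \<in> I1"
        have "((\<lambda>s. g s ** h s) has_vector_derivative g s ** ((- Ah s) ** h s) + (g s ** Ah s) ** h s) (at s within I1)"
          using bounded_bilinear.has_vector_derivative[OF bb_mm gd[rule_format, OF s] hd[rule_format, OF s]] .
        moreover have "g s ** ((- Ah s) ** h s) + (g s ** Ah s) ** h s = 0"
          by (simp add: mm_neg_left mm_neg_right matrix_mul_assoc)
        ultimately show "((\<lambda>s. g s ** h s - mat 1) has_vector_derivative 0) (at s within I1)"
          using has_vector_derivative_diff[OF _ has_vector_derivative_const] by fastforce
      qed
      show "\<forall>t\<in>I1. \<exists>\<delta>>0. \<exists>L. \<forall>s\<in>I1. dist s t < \<delta> \<longrightarrow> norm (0::'n endo) \<le> L * norm (g s ** h s - mat 1)"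
        by (intro ballI exI[of _ 1] conjI exI[of _ 0]) auto
    qed
    then show ?thesis by simp
  qed
  have hg: "\<forall>s\<in>I1. h s ** g s = mat 1" using gh mm_comm_inv by blast
  have AhJ: "Ah s ** J = J ** Ah s" for s
  proof -
    have JJ: "J ** (J ** X) = - X" for X :: "'n endo"
      by (simp add: matrix_mul_assoc J_cplx mm_neg_left)
    have JJ': "X ** J ** J = - X" for X :: "'n endo"
      by (simp add: matrix_mul_assoc[symmetric] J_cplx mm_neg_right)
    have e1: "(A s - J ** A s ** J) ** J = A s ** J + J ** A s"
      by (simp add: mm_diff_left JJ')
    have e2: "J ** (A s - J ** A s ** J) = J ** A s + A s ** J"
    proof -
      have "J ** (J ** A s ** J) = (J ** (J ** A s)) ** J" by (simp add: matrix_mul_assoc)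
      also have "\<dots> = - (A s ** J)" by (simp add: JJ mm_neg_left)
      finally show ?thesis by (simp add: mm_diff_right)
    qed
    have "Ah s ** J = (1/2) *\<^sub>R ((A s - J ** A s ** J) ** J)"
      unfolding Ah_def by (simp add: scalar_matrix_assoc)
    also have "\<dots> = (1/2) *\<^sub>R (J ** (A s - J ** A s ** J))" unfolding e1 e2 by (simp add: add.commute)
    also have "\<dots> = J ** Ah s" unfolding Ah_def by (simp add: matrix_scalar_ac scalar_matrix_assoc)
    finally show ?thesis .
  qed
  have gJ: "\<forall>s\<in>I1. g s ** J = J ** g s"
  proof -
    have "\<forall>s\<in>I1. (\<lambda>s. g s ** J - J ** g s) s = 0"
    proof (rule gronwall_zero[OF I1 t1I1, where z'="\<lambda>s. (g s ** J - J ** g s) ** Ah s"])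
      show "g t1 ** J - J ** g t1 = 0" using g0 by simp
      show "\<forall>s\<in>I1. ((\<lambda>s. g s ** J - J ** g s) has_vector_derivative (g s ** J - J ** g s) ** Ah s) (at s within I1)"
      proof
        fix s assume s: "s \<in> I1"
        have d1: "((\<lambda>s. g s ** J) has_vector_derivative (g s ** Ah s) ** J) (at s within I1)"
          using bounded_bilinear.has_vector_derivative[OF bb_mm gd[rule_format, OF s] has_vector_derivative_const[of J]] by simp
        have d2: "((\<lambda>s. J ** g s) has_vector_derivative J ** (g s ** Ah s)) (at s within I1)"
          using bounded_bilinear.has_vector_derivative[OF bb_mm has_vector_derivative_const[of J] gd[rule_format, OF s]] by simp
        have "(g s ** Ah s) ** J - J ** (g s ** Ah s) = (g s ** J - J ** g s) ** Ah s"
          by (simp add: mm_diff_left matrix_mul_assoc[symmetric] AhJ)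
        then show "((\<lambda>s. g s ** J - J ** g s) has_vector_derivative (g s ** J - J ** g s) ** Ah s) (at s within I1)"
          using has_vector_derivative_diff[OF d1 d2] by simp
      qed
      show "\<forall>t\<in>I1. \<exists>\<delta>>0. \<exists>L. \<forall>s\<in>I1. dist s t < \<delta> \<longrightarrow> norm ((g s ** J - J ** g s) ** Ah s) \<le> L * norm (g s ** J - J ** g s)"
      proof
        fix t assume t: "t \<in> I1"
        obtain \<delta> where "\<delta> > 0" "\<forall>s\<in>I1. dist s t < \<delta> \<longrightarrow> norm (Ah s) \<le> norm (Ah t) + 1"
          using local_norm_bound[OF Ahc t] by blast
        have "\<forall>s\<in>I1. dist s t < \<delta> \<longrightarrow> norm ((g s ** J - J ** g s) ** Ah s) \<le> ((norm (Ah t) + 1) * Km) * norm (g s ** J - J ** g s)"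
        proof (intro ballI impI)
          fix s assume s: "s \<in> I1" "dist s t < \<delta>"
          have "norm ((g s ** J - J ** g s) ** Ah s) \<le> norm (g s ** J - J ** g s) * norm (Ah s) * Km" using Km by blast
          also have "\<dots> \<le> norm (g s ** J - J ** g s) * (norm (Ah t) + 1) * Km"
            using s \<open>\<forall>s\<in>I1. dist s t < \<delta> \<longrightarrow> norm (Ah s) \<le> norm (Ah t) + 1\<close> Km
            by (intro mult_right_mono mult_left_mono) auto
          finally show "norm ((g s ** J - J ** g s) ** Ah s) \<le> ((norm (Ah t) + 1) * Km) * norm (g s ** J - J ** g s)"
            by (simp add: mult_ac)
        qed
        then show "\<exists>\<delta>>0. \<exists>L. \<forall>s\<in>I1. dist s t < \<delta> \<longrightarrow> norm ((g s ** J - J ** g s) ** Ah s) \<le> L * norm (g s ** J - J ** g s)"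
          using \<open>\<delta> > 0\<close> by blast
      qed
    qed
    then show ?thesis by simp
  qed
  have hJ: "\<forall>s\<in>I1. h s ** J = J ** h s"
  proof
    fix s assume s: "s \<in> I1"
    have "h s ** J = h s ** J ** (g s ** h s)" using gh s by simp
    also have "\<dots> = h s ** (g s ** J) ** h s" using gJ s by (simp add: matrix_mul_assoc)
    also have "\<dots> = J ** h s" using hg s by (simp add: matrix_mul_assoc)
    finally show "h s ** J = J ** h s" .
  qed
  define \<xi> where "\<xi> s = Tr (h s) (g s) \<nu>1" for s
  have \<xi>C: "\<forall>s\<in>I1. \<xi> s \<in> Cset J"
    unfolding \<xi>_def using Tr_C[OF C1[folded \<nu>1_def]] gh gJ hJ by blast
  have \<xi>d: "\<forall>s\<in>I1. (\<xi> has_vector_derivative - piop (Ah s) (\<xi> s)) (at s within I1)"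
  proof
    fix s assume s: "s \<in> I1"
    have "(h has_vector_derivative - (Ah s ** h s)) (at s within I1)"
      using hd s by (simp add: mm_neg_left)
    then show "(\<xi> has_vector_derivative - piop (Ah s) (\<xi> s)) (at s within I1)"
      unfolding \<xi>_def using Tr_flow_deriv[of h "Ah s" s I1 g] gd s by blast
  qed
  have \<xi>1: "\<xi> t1 = \<nu>1" unfolding \<xi>_def using h0 g0 by (simp add: Tr_id)
  have \<xi>c: "continuous_on I1 \<xi>" using cont_from_deriv[OF \<xi>d] .
  obtain \<delta>2 where d2: "\<delta>2 > 0" "\<forall>s\<in>I1. dist s t1 < \<delta>2 \<longrightarrow> dist (\<xi> s) \<nu>1 < r"
    using \<xi>c t1I1 r(1) \<xi>1 unfolding continuous_on_iff by metis
  define \<delta> where "\<delta> = min \<delta>1 \<delta>2"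
  define I2 where "I2 = {s\<in>I. dist s t1 < \<delta>}"
  have I2: "is_interval I2" unfolding I2_def by (rule interval_ball[OF I])
  have t1I2: "t1 \<in> I2" using t1 d1 d2 unfolding I2_def \<delta>_def by simp
  have I2I1: "I2 \<subseteq> I1" unfolding I2_def I1_def \<delta>_def by auto
  have I2I: "I2 \<subseteq> I" unfolding I2_def by auto
  have \<xi>ball: "\<xi> s \<in> cball \<nu>1 r" if "s \<in> I2" for s
    using d2 that I2I1 unfolding I2_def \<delta>_def by (auto simp: dist_commute less_imp_le)
  define R where "R = norm \<nu>1 + r"
  have Rb: "norm y \<le> R" if "y \<in> cball \<nu>1 r" for y
    using that norm_triangle_sub[of y \<nu>1] unfolding R_def by (auto simp: dist_norm norm_minus_commute)
  obtain Kp where Kp: "Kp > 0" "\<forall>a b. norm (piop a b) \<le> norm a * norm (b::'n brkt) * Kp"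
    using bounded_bilinear.pos_bounded[OF bb_piop] by blast
  obtain Kq where Kq: "Kq > 0" "\<forall>a b. norm (Pop a - Pop (b::'n brkt)) \<le> Kq * (norm a + norm b) * norm (a - b)"
    using Pop_lip by blast
  have APc: "continuous_on (cball \<nu>1 r) (\<lambda>y. Pop y - S y)"
    unfolding Pop_Q
    by (intro continuous_on_diff bounded_bilinear.continuous_on[OF bb_PopQ] continuous_on_id
        continuous_on_subset[OF Sc r(2)])
  obtain MA where MA: "MA \<ge> 0" "\<forall>y\<in>cball \<nu>1 r. norm (Pop y - S y) \<le> MA"
    using bound_on_compact[OF APc compact_cball] by blast
  define nJ where "nJ = norm J * norm J * Km * Km"
  have nJ0: "nJ \<ge> 0" unfolding nJ_def using Km by simp
  have JXJ: "norm (J ** X ** J) \<le> nJ * norm X" for X :: "'n endo"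
  proof -
    have "norm (J ** X ** J) \<le> norm (J ** X) * norm J * Km" using Km by blast
    also have "\<dots> \<le> (norm J * norm X * Km) * norm J * Km"
      using Km by (intro mult_right_mono) auto
    finally show ?thesis unfolding nJ_def by (simp add: mult_ac)
  qed
  define L where "L = Kp * MA + Kp * R * (1 + nJ) * (Kq * (R + R) + Ls)"
  have eqI2: "\<forall>s\<in>I2. (\<lambda>s. \<nu> s - \<xi> s) s = 0"
  proof (rule gronwall_zero[OF I2 t1I2, where z'="\<lambda>s. - piop (A s) (\<nu> s) - (- piop (Ah s) (\<xi> s))"])
    show "\<nu> t1 - \<xi> t1 = 0" using \<xi>1 \<nu>1_def by simp
    show "\<forall>s\<in>I2. ((\<lambda>s. \<nu> s - \<xi> s) has_vector_derivative - piop (A s) (\<nu> s) - (- piop (Ah s) (\<xi> s))) (at s within I2)"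
    proof
      fix s assume s: "s \<in> I2"
      have "(\<nu> has_vector_derivative - piop (A s) (\<nu> s)) (at s within I2)"
        using has_vector_derivative_within_subset[OF flow[rule_format] I2I] s I2I unfolding A_def by blast
      moreover have "(\<xi> has_vector_derivative - piop (Ah s) (\<xi> s)) (at s within I2)"
        using has_vector_derivative_within_subset[OF \<xi>d[rule_format] I2I1] s I2I1 by blast
      ultimately show "((\<lambda>s. \<nu> s - \<xi> s) has_vector_derivative - piop (A s) (\<nu> s) - (- piop (Ah s) (\<xi> s))) (at s within I2)"
        by (rule has_vector_derivative_diff)
    qed
    show "\<forall>t\<in>I2. \<exists>\<delta>>0. \<exists>L. \<forall>s\<in>I2. dist s t < \<delta> \<longrightarrow> norm (- piop (A s) (\<nu> s) - (- piop (Ah s) (\<xi> s))) \<le> L * norm (\<nu> s - \<xi> s)"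
    proof -
    have bnd: "\<forall>s\<in>I2. norm (- piop (A s) (\<nu> s) - (- piop (Ah s) (\<xi> s))) \<le> L * norm (\<nu> s - \<xi> s)"
    proof
      fix s assume s: "s \<in> I2"
      have sI1: "s \<in> I1" using s I2I1 by auto
      have nb: "\<nu> s \<in> cball \<nu>1 r" using \<nu>ball[OF sI1] .
      have xb: "\<xi> s \<in> cball \<nu>1 r" using \<xi>ball[OF s] .
      define X where "X = A s"
      define Y where "Y = Pop (\<xi> s) - S (\<xi> s)"
      define W where "W = X - Y"
      have YJ: "Y ** J = J ** Y"
      proof -
        have "Pop (\<xi> s) ** J = J ** Pop (\<xi> s)" using Pop_J[OF J_orth] \<xi>C sI1 by blast
        moreover have "S (\<xi> s) ** J = J ** S (\<xi> s)" using S_u \<xi>C sI1 unfolding ualg_def by blast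
        ultimately show ?thesis unfolding Y_def by (simp add: mm_diff_left mm_diff_right)
      qed
      have JYJ: "J ** Y ** J = - Y"
        by (simp add: matrix_mul_assoc[symmetric] YJ[symmetric]) (simp add: matrix_mul_assoc J_cplx mm_neg_right)
      have WW: "W + J ** W ** J = X + J ** X ** J"
      proof -
        have "W + J ** W ** J = (X + J ** X ** J) - (Y + J ** Y ** J)"
          unfolding W_def by (simp add: mm_diff_left mm_diff_right)
        also have "Y + J ** Y ** J = 0" by (simp add: JYJ)
        finally show ?thesis by simp
      qed
      have XAh: "X - Ah s = (1/2) *\<^sub>R (W + J ** W ** J)"
      proof -
        have h: "X = (1/2) *\<^sub>R X + (1/2) *\<^sub>R X" by (simp flip: scaleR_add_left)
        have "X - Ah s = ((1/2) *\<^sub>R X + (1/2) *\<^sub>R X) - ((1/2) *\<^sub>R X - (1/2) *\<^sub>R (J ** X ** J))"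
          unfolding Ah_def X_def[symmetric] scaleR_diff_right by (subst (1) h) (rule refl)
        also have "\<dots> = (1/2) *\<^sub>R (X + J ** X ** J)" by (simp add: scaleR_add_right)
        finally show ?thesis unfolding WW .
      qed
      have nW: "norm W \<le> (Kq * (R + R) + Ls) * norm (\<nu> s - \<xi> s)"
      proof -
        have "W = (Pop (\<nu> s) - Pop (\<xi> s)) - (S (\<nu> s) - S (\<xi> s))" unfolding W_def X_def Y_def A_def by simp
        then have "norm W \<le> norm (Pop (\<nu> s) - Pop (\<xi> s)) + norm (S (\<nu> s) - S (\<xi> s))"
          by (simp add: norm_triangle_ineq4)
        also have "\<dots> \<le> Kq * (R + R) * norm (\<nu> s - \<xi> s) + Ls * norm (\<nu> s - \<xi> s)"
        proof (rule add_mono)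
          have "norm (Pop (\<nu> s) - Pop (\<xi> s)) \<le> Kq * (norm (\<nu> s) + norm (\<xi> s)) * norm (\<nu> s - \<xi> s)"
            using Kq by blast
          also have "\<dots> \<le> Kq * (R + R) * norm (\<nu> s - \<xi> s)"
            using Rb[OF nb] Rb[OF xb] Kq by (intro mult_right_mono mult_left_mono add_mono) auto
          finally show "norm (Pop (\<nu> s) - Pop (\<xi> s)) \<le> Kq * (R + R) * norm (\<nu> s - \<xi> s)" .
          show "norm (S (\<nu> s) - S (\<xi> s)) \<le> Ls * norm (\<nu> s - \<xi> s)" using Ls nb xb by blast
        qed
        finally show ?thesis by (simp add: algebra_simps)
      qed
      have nXAh: "norm (X - Ah s) \<le> (1 + nJ) * ((Kq * (R + R) + Ls) * norm (\<nu> s - \<xi> s))"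
      proof -
        have "norm (X - Ah s) \<le> norm (W + J ** W ** J)" unfolding XAh by simp
        also have "\<dots> \<le> norm W + nJ * norm W" by (intro order_trans[OF norm_triangle_ineq] add_mono JXJ order_refl)
        also have "\<dots> = (1 + nJ) * norm W" by (simp add: algebra_simps)
        also have "\<dots> \<le> (1 + nJ) * ((Kq * (R + R) + Ls) * norm (\<nu> s - \<xi> s))"
          using nW nJ0 by (intro mult_left_mono) auto
        finally show ?thesis .
      qed
      have "- piop (A s) (\<nu> s) - (- piop (Ah s) (\<xi> s)) = - piop X (\<nu> s - \<xi> s) - piop (X - Ah s) (\<xi> s)"
        unfolding X_def
        by (simp add: bounded_bilinear.diff_left[OF bb_piop] bounded_bilinear.diff_right[OF bb_piop])
      then have "norm (- piop (A s) (\<nu> s) - (- piop (Ah s) (\<xi> s))) \<le> norm (piop X (\<nu> s - \<xi> s)) + norm (piop (X - Ah s) (\<xi> s))"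
        by (metis norm_minus_cancel norm_triangle_ineq4 diff_minus_eq_add uminus_add_conv_diff)
      also have "\<dots> \<le> MA * norm (\<nu> s - \<xi> s) * Kp + ((1 + nJ) * ((Kq * (R + R) + Ls) * norm (\<nu> s - \<xi> s))) * R * Kp"
      proof (rule add_mono)
        have "norm (piop X (\<nu> s - \<xi> s)) \<le> norm X * norm (\<nu> s - \<xi> s) * Kp" using Kp by blast
        also have "\<dots> \<le> MA * norm (\<nu> s - \<xi> s) * Kp"
          using MA nb Kp unfolding X_def A_def by (intro mult_right_mono) auto
        finally show "norm (piop X (\<nu> s - \<xi> s)) \<le> MA * norm (\<nu> s - \<xi> s) * Kp" .
        have "norm (piop (X - Ah s) (\<xi> s)) \<le> norm (X - Ah s) * norm (\<xi> s) * Kp" using Kp by blast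
        also have "\<dots> \<le> ((1 + nJ) * ((Kq * (R + R) + Ls) * norm (\<nu> s - \<xi> s))) * R * Kp"
          using nXAh Rb[OF xb] Kp order_trans[OF norm_ge_zero nXAh] by (intro mult_right_mono mult_mono) auto
        finally show "norm (piop (X - Ah s) (\<xi> s)) \<le> ((1 + nJ) * ((Kq * (R + R) + Ls) * norm (\<nu> s - \<xi> s))) * R * Kp" .
      qed
      also have "\<dots> = L * norm (\<nu> s - \<xi> s)" unfolding L_def by (simp add: algebra_simps)
      finally show "norm (- piop (A s) (\<nu> s) - (- piop (Ah s) (\<xi> s))) \<le> L * norm (\<nu> s - \<xi> s)" .
    qed
    show ?thesis using bnd by (intro ballI exI[of _ 1] conjI exI[of _ L]) auto
    qed
  qed
  show ?thesis
  proof (intro exI[of _ \<delta>] conjI ballI impI)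
    show "\<delta> > 0" unfolding \<delta>_def using d1 d2 by simp
    fix s assume "s \<in> I" "dist s t1 < \<delta>"
    then have s: "s \<in> I2" unfolding I2_def by simp
    then have "\<nu> s = \<xi> s" using eqI2 by simp
    then show "\<nu> s \<in> Cset J" using \<xi>C I2I1 s by auto
  qed
qed



lemma Cm_neg: "Cm m I x \<Longrightarrow> Cm m I (\<lambda>t. - x t)"
  using Cm_linear[OF bounded_linear_minus[OF bounded_linear_ident]] by blast

lemma Cm_diff: "Cm m I x \<Longrightarrow> Cm m I y \<Longrightarrow> Cm m I (\<lambda>t. x t - y t)"
  using Cm_add[of m I x "\<lambda>t. - y t"] Cm_neg[of m I y] by simp

lemma C_invariant:
  fixes J :: "'n::{finite,linorder} endo" and S :: "'n brkt \<Rightarrow> 'n endo" and \<nu> :: "real \<Rightarrow> 'n brkt"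
  assumes J_cplx: "J ** J = - mat 1" and J_orth: "transpose J ** J = mat 1"
    and U: "open U" "Cset J \<subseteq> U" and sf: "smooth_fam U D" and DS: "D [] = S"
    and S_u: "\<forall>\<xi>\<in>Cset J. S \<xi> \<in> ualg J"
    and I: "is_interval I"
    and flow: "\<forall>t\<in>I. (\<nu> has_vector_derivative - piop (Pop (\<nu> t) - S (\<nu> t)) (\<nu> t)) (at t within I)"
    and t0: "t0 \<in> I" and C0: "\<nu> t0 \<in> Cset J"
  shows "\<forall>t\<in>I. \<nu> t \<in> Cset J"
proof -
  define Z where "Z = I \<inter> \<nu> -` Cset J"
  have cl: "closedin (top_of_set I) Z"
    unfolding Z_def by (rule continuous_closedin_preimage[OF cont_from_deriv[OF flow] Cset_closed])
  have op: "openin (top_of_set I) Z"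
    unfolding openin_euclidean_subtopology_iff
  proof (intro conjI ballI)
    show "Z \<subseteq> I" unfolding Z_def by auto
    fix t assume "t \<in> Z"
    then have "t \<in> I" "\<nu> t \<in> Cset J" unfolding Z_def by auto
    from C_local[OF J_cplx J_orth U sf DS S_u I flow this]
    show "\<exists>e>0. \<forall>x'\<in>I. dist x' t < e \<longrightarrow> x' \<in> Z" unfolding Z_def by auto
  qed
  have "Z = {} \<or> Z = I" using is_interval_connected[OF I] cl op unfolding connected_clopen by blast
  moreover have "t0 \<in> Z" using t0 C0 unfolding Z_def by auto
  ultimately show ?thesis unfolding Z_def by auto
qed

theorem theorem2p2:
  fixes J :: "'n::{finite,linorder} endo"
    and S :: "'n brkt \<Rightarrow> 'n endo"
    and \<mu> :: "'n brkt"
    and \<nu> :: "real \<Rightarrow> 'n brkt"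
    and I :: "real set"
  assumes J_cplx: "J ** J = - mat 1"
    and J_orth: "transpose J ** J = mat 1"
    and mu_C: "\<mu> \<in> Cset J"
    and S_smooth: "\<exists>U. Cset J \<subseteq> U \<and> smooth_on U S"
    and S_u: "\<forall>\<xi>\<in>Cset J. S \<xi> \<in> ualg J"
    and I_int: "is_interval I" and I0: "0 \<in> I"
    and nu_init: "\<nu> 0 = \<mu>"
    and nu_flow: "\<forall>t\<in>I. (\<nu> has_vector_derivative
                     - piop (Pop (\<nu> t) - S (\<nu> t)) (\<nu> t)) (at t within I)"
  shows "\<exists>k :: real \<Rightarrow> 'n endo. \<exists>\<mu>t :: real \<Rightarrow> 'n brkt.
           smooth_curve I k \<and> (\<forall>t\<in>I. k t \<in> Ugrp J) \<and>
           \<mu>t 0 = \<mu> \<and>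
           (\<forall>t\<in>I. (\<mu>t has_vector_derivative - piop (Pop (\<mu>t t)) (\<mu>t t)) (at t within I)) \<and>
           (\<forall>t\<in>I. \<nu> t = act (k t) (\<mu>t t))"
proof -
  obtain U where CU: "Cset J \<subseteq> U" and sm: "smooth_on U S" using S_smooth by blast
  have Uo: "open U" using sm unfolding smooth_on_def by blast
  obtain D where DS: "D [] = S" and sf: "smooth_fam U D"
    using sm unfolding smooth_on_def smooth_fam_def by blast
  have nuC: "\<forall>t\<in>I. \<nu> t \<in> Cset J"
    by (rule C_invariant[OF J_cplx J_orth Uo CU sf DS S_u I_int nu_flow I0]) (simp add: nu_init mu_C)
  have nuU: "\<forall>t\<in>I. \<nu> t \<in> U" using nuC CU by blast
  have nuc: "continuous_on I \<nu>" using cont_from_deriv[OF nu_flow] .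
  have Sc: "continuous_on U S" using sf DS unfolding smooth_fam_def by metis
  define B where "B t = S (\<nu> t)" for t
  have Bc: "continuous_on I B" unfolding B_def
    using continuous_on_compose2[OF Sc nuc] nuU by blast
  have BJ: "\<forall>t\<in>I. B t ** J = J ** B t" and BT: "\<forall>t\<in>I. transpose (B t) = - B t"
    using S_u nuC unfolding B_def ualg_def by auto
  obtain k where k0: "k 0 = mat 1" and kd: "\<forall>t\<in>I. (k has_vector_derivative B t ** k t) (at t within I)"
    using lin_ode[OF bb_mm I_int I0 Bc, of "mat 1"] by blast
  obtain Km where Km: "Km > 0" "\<forall>(a::'n endo) (b::'n endo). norm (a ** b) \<le> norm a * norm b * Km"
    using bounded_bilinear.pos_bounded[OF bb_mm] by blast
  have orth: "\<forall>t\<in>I. transpose (k t) ** k t = mat 1"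
  proof -
    have "\<forall>t\<in>I. (\<lambda>t. transpose (k t) ** k t - mat 1) t = 0"
    proof (rule gronwall_zero[OF I_int I0, where z'="\<lambda>s. 0"])
      show "transpose (k 0) ** k 0 - mat 1 = 0" using k0 by simp
      show "\<forall>s\<in>I. ((\<lambda>t. transpose (k t) ** k t - mat 1) has_vector_derivative 0) (at s within I)"
      proof
        fix s assume s: "s \<in> I"
        have dT: "((\<lambda>t. transpose (k t)) has_vector_derivative transpose (B s ** k s)) (at s within I)"
          using bounded_linear.has_vector_derivative[OF bl_transpose kd[rule_format, OF s]] .
        have "((\<lambda>t. transpose (k t) ** k t) has_vector_derivative
                transpose (k s) ** (B s ** k s) + transpose (B s ** k s) ** k s) (at s within I)"
          using bounded_bilinear.has_vector_derivative[OF bb_mm dT kd[rule_format, OF s]] .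
        moreover have "transpose (k s) ** (B s ** k s) + transpose (B s ** k s) ** k s = 0"
          using BT s by (simp add: matrix_transpose_mul mm_neg_left mm_neg_right matrix_mul_assoc)
        ultimately show "((\<lambda>t. transpose (k t) ** k t - mat 1) has_vector_derivative 0) (at s within I)"
          using has_vector_derivative_diff[OF _ has_vector_derivative_const] by fastforce
      qed
      show "\<forall>t\<in>I. \<exists>\<delta>>0. \<exists>L. \<forall>s\<in>I. dist s t < \<delta> \<longrightarrow> norm (0::'n endo) \<le> L * norm (transpose (k s) ** k s - mat 1)"
        by (intro ballI exI[of _ 1] conjI exI[of _ 0]) auto
    qed
    then show ?thesis by simp
  qed
  have orth2: "\<forall>t\<in>I. k t ** transpose (k t) = mat 1" using orth orth_right by blast
  have kJ: "\<forall>t\<in>I. k t ** J = J ** k t"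
  proof -
    have "\<forall>t\<in>I. (\<lambda>t. k t ** J - J ** k t) t = 0"
    proof (rule gronwall_zero[OF I_int I0, where z'="\<lambda>s. B s ** (k s ** J - J ** k s)"])
      show "k 0 ** J - J ** k 0 = 0" using k0 by simp
      show "\<forall>s\<in>I. ((\<lambda>t. k t ** J - J ** k t) has_vector_derivative B s ** (k s ** J - J ** k s)) (at s within I)"
      proof
        fix s assume s: "s \<in> I"
        have d1: "((\<lambda>t. k t ** J) has_vector_derivative (B s ** k s) ** J) (at s within I)"
          using bounded_bilinear.has_vector_derivative[OF bb_mm kd[rule_format, OF s] has_vector_derivative_const[of J]] by simp
        have d2: "((\<lambda>t. J ** k t) has_vector_derivative J ** (B s ** k s)) (at s within I)"
          using bounded_bilinear.has_vector_derivative[OF bb_mm has_vector_derivative_const[of J] kd[rule_format, OF s]] by simp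
        have "(B s ** k s) ** J - J ** (B s ** k s) = B s ** (k s ** J - J ** k s)"
          using BJ s by (simp add: mm_diff_right matrix_mul_assoc)
        then show "((\<lambda>t. k t ** J - J ** k t) has_vector_derivative B s ** (k s ** J - J ** k s)) (at s within I)"
          using has_vector_derivative_diff[OF d1 d2] by simp
      qed
      show "\<forall>t\<in>I. \<exists>\<delta>>0. \<exists>L. \<forall>s\<in>I. dist s t < \<delta> \<longrightarrow> norm (B s ** (k s ** J - J ** k s)) \<le> L * norm (k s ** J - J ** k s)"
      proof
        fix t assume t: "t \<in> I"
        obtain \<delta> where d: "\<delta> > 0" "\<forall>s\<in>I. dist s t < \<delta> \<longrightarrow> norm (B s) \<le> norm (B t) + 1"
          using local_norm_bound[OF Bc t] by blast
        have "\<forall>s\<in>I. dist s t < \<delta> \<longrightarrow> norm (B s ** (k s ** J - J ** k s)) \<le> ((norm (B t) + 1) * Km) * norm (k s ** J - J ** k s)"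
        proof (intro ballI impI)
          fix s assume s: "s \<in> I" "dist s t < \<delta>"
          have "norm (B s ** (k s ** J - J ** k s)) \<le> norm (B s) * norm (k s ** J - J ** k s) * Km" using Km by blast
          also have "\<dots> \<le> (norm (B t) + 1) * norm (k s ** J - J ** k s) * Km"
            using s d Km by (intro mult_right_mono) auto
          finally show "norm (B s ** (k s ** J - J ** k s)) \<le> ((norm (B t) + 1) * Km) * norm (k s ** J - J ** k s)"
            by (simp add: mult_ac)
        qed
        then show "\<exists>\<delta>>0. \<exists>L. \<forall>s\<in>I. dist s t < \<delta> \<longrightarrow> norm (B s ** (k s ** J - J ** k s)) \<le> L * norm (k s ** J - J ** k s)"
          using d(1) by blast
      qed
    qed
    then show ?thesis by simp
  qed
  define \<mu>t where "\<mu>t t = Tr (transpose (k t)) (k t) (\<nu> t)" for t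
  have mu0: "\<mu>t 0 = \<mu>" unfolding \<mu>t_def using k0 nu_init by (simp add: Tr_id)
  have act_eq: "\<forall>t\<in>I. \<nu> t = act (k t) (\<mu>t t)"
  proof
    fix t assume t: "t \<in> I"
    have kk: "k t *v (transpose (k t) *v x) = x" for x
      using orth2 t by (simp add: matrix_vector_mul_assoc)
    show "\<nu> t = act (k t) (\<mu>t t)"
      unfolding act_orth[OF orth[rule_format, OF t]] \<mu>t_def
      by (rule br_ext) (simp add: br_Tr kk)
  qed
  have mud: "\<forall>t\<in>I. (\<mu>t has_vector_derivative - piop (Pop (\<mu>t t)) (\<mu>t t)) (at t within I)"
  proof
    fix t assume t: "t \<in> I"
    define kt where "kt = k t"
    define P where "P = Pop (\<nu> t)"
    have kk: "kt *v (transpose kt *v x) = x" for x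
      using orth2 t unfolding kt_def by (simp add: matrix_vector_mul_assoc)
    have oT: "transpose (transpose kt) ** transpose kt = mat 1" using orth2 t unfolding kt_def by simp
    have sk: "is_bracket (\<nu> t)" using nuC t unfolding Cset_def by blast
    have Pmu: "Pop (\<mu>t t) = transpose kt ** P ** kt"
      using Pop_Tr[OF oT sk] unfolding \<mu>t_def kt_def P_def by simp
    have tBk: "transpose (B t ** kt) = - (transpose kt ** B t)"
      using BT t by (simp add: matrix_transpose_mul mm_neg_right)
    have dT: "((\<lambda>t. transpose (k t)) has_vector_derivative transpose (B t ** k t)) (at t within I)"
      using bounded_linear.has_vector_derivative[OF bl_transpose kd[rule_format, OF t]] .
    have D: "(\<mu>t has_vector_derivative
      mkbr (\<lambda>x y. transpose (B t ** kt) *v br (\<nu> t) (kt *v x) (kt *v y)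
          + transpose kt *v br (- piop (P - B t) (\<nu> t)) (kt *v x) (kt *v y)
          + transpose kt *v br (\<nu> t) ((B t ** kt) *v x) (kt *v y)
          + transpose kt *v br (\<nu> t) (kt *v x) ((B t ** kt) *v y))) (at t within I)"
      unfolding \<mu>t_def[abs_def] kt_def P_def B_def
      using Tr_deriv[OF dT kd[rule_format, OF t] nu_flow[rule_format, OF t]] unfolding B_def .
    have E: "mkbr (\<lambda>x y. transpose (B t ** kt) *v br (\<nu> t) (kt *v x) (kt *v y)
          + transpose kt *v br (- piop (P - B t) (\<nu> t)) (kt *v x) (kt *v y)
          + transpose kt *v br (\<nu> t) ((B t ** kt) *v x) (kt *v y)
          + transpose kt *v br (\<nu> t) (kt *v x) ((B t ** kt) *v y))
        = - piop (Pop (\<mu>t t)) (\<mu>t t)"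
    proof -
      have "mkbr (\<lambda>x y. transpose (B t ** kt) *v br (\<nu> t) (kt *v x) (kt *v y)
          + transpose kt *v br (- piop (P - B t) (\<nu> t)) (kt *v x) (kt *v y)
          + transpose kt *v br (\<nu> t) ((B t ** kt) *v x) (kt *v y)
          + transpose kt *v br (\<nu> t) (kt *v x) ((B t ** kt) *v y))
        = mkbr (br (- piop (Pop (\<mu>t t)) (\<mu>t t)))"
        unfolding Pmu tBk
        by (rule arg_cong[where f=mkbr], intro ext)
          (simp add: \<mu>t_def kt_def[symmetric] br_piop br_Tr br_lin mv_neg_left matrix_vector_mul_assoc[symmetric]
            kk mv_neg matrix_vector_mult_diff_rdistrib matrix_vector_mult_diff_distrib matrix_vector_right_distrib
            algebra_simps)
      then show ?thesis by (simp only: mkbr_br)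
    qed
    show "(\<mu>t has_vector_derivative - piop (Pop (\<mu>t t)) (\<mu>t t)) (at t within I)"
      using D unfolding E .
  qed
  have nuCm: "Cm m I \<nu>" for m
  proof (induction m)
    case 0 show ?case by (rule Cm_0)
  next
    case (Suc m)
    have "Cm m I (\<lambda>t. Pop (\<nu> t))" unfolding Pop_Q by (rule Cm_bilinear[OF bb_PopQ Suc Suc])
    moreover have "Cm m I (\<lambda>t. S (\<nu> t))"
      using Cm_chain[OF Uo nuU Suc sf] unfolding DS .
    ultimately have "Cm m I (\<lambda>t. - piop (Pop (\<nu> t) - S (\<nu> t)) (\<nu> t))"
      by (intro Cm_neg Cm_bilinear[OF bb_piop] Cm_diff Suc)
    then show ?case unfolding Cm_Suc using nu_flow
      by (intro exI[of _ "\<lambda>t. - piop (Pop (\<nu> t) - S (\<nu> t)) (\<nu> t)"]) blast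
  qed
  have BCm: "Cm m I B" for m
    unfolding B_def using Cm_chain[OF Uo nuU nuCm sf] unfolding DS .
  have kCm: "Cm m I k" for m
  proof (induction m)
    case 0 show ?case by (rule Cm_0)
  next
    case (Suc m)
    have "Cm m I (\<lambda>t. B t ** k t)" by (rule Cm_bilinear[OF bb_mm BCm Suc])
    then show ?case unfolding Cm_Suc using kd
      by (intro exI[of _ "\<lambda>t. B t ** k t"]) blast
  qed
  have ksm: "smooth_curve I k" by (rule smooth_curve_from_Cm[OF I_int]) (use kCm in blast)
  have kU: "\<forall>t\<in>I. k t \<in> Ugrp J"
  proof
    fix t assume t: "t \<in> I"
    have "invertible (k t)" unfolding invertible_def using orth orth2 t by blast
    then show "k t \<in> Ugrp J" unfolding Ugrp_def using kJ orth t by auto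
  qed
  show ?thesis
    by (rule exI[of _ k], rule exI[of _ \<mu>t]) (use ksm kU mu0 mud act_eq in blast)
qed



end
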